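(* Assume the standing hypotheses (H) below, and assume there exists a positive stationary solution $\bar u\in L^1(\Omega)\cap L^\infty(\Omega)$, i.e. $\mathcal{M}[\bar u]+[a-\int_\Omega k\bar u]\bar u=0$ a.e. in $\Omega$. Let $u_0\in L^1(\Omega)\cap L^\infty(\Omega)$, $u_0\ge0$, $u_0\not\equiv0$, and let $u\in C^1((0,\infty);L^1(\Omega)\cap L^\infty(\Omega))$ be a non-negative solution of $$\partial_t u=\mathcal{M}[u]+\Big[a(x)-\int_\Omega k(y)u(t,y)\,dy\Big]u,\qquad u(0,\cdot)=u_0.$$ Then there exist constants $C_2>c_2>0$, depending on $u_0$, such that $c_2\le\|u(t,\cdot)\|_{L^2(\Omega)}<C_2$ for all $t>0$.
   Context: Standing hypotheses (H): $\Omega\subset\mathbb{R}^N$ is an open bounded connected set with Lipschitz boundary; $a$ continuous on $\bar\Omega$ and positive; $m\ge0$ symmetric, $m(x,\cdot)$ measurable for every $x$, $m(\cdot,y)$ uniformly continuous for a.e. $y$, with $\sup_x\int_\Omega m(x,y)dy<\infty$; $k=k(y)$ with $c_0\mathbf{1}_\Omega\le k\le C_0\mathbf{1}_\Omega$ for constants $C_0\ge c_0>0$. $\mathcal{M}[v](x):=\int_\Omega m(x,y)[v(y)-v(x)]dy$. *)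

theory Defs
  imports "HOL-Analysis.Analysis"
begin

text \<open>Lipschitz boundary: near every boundary point, after choosing a unit direction e,
  the domain is the (strict) supergraph in direction e of a Lipschitz function defined
  on the hyperplane orthogonal to e (gamma is evaluated on the orthogonal projection).\<close>
definition lipschitz_boundary :: "'a::euclidean_space set \<Rightarrow> bool" where
  "lipschitz_boundary \<Omega> \<longleftrightarrow>
     (\<forall>x0\<in>frontier \<Omega>. \<exists>r>0. \<exists>e::'a. norm e = 1 \<and>
        (\<exists>(\<gamma>::'a \<Rightarrow> real) L. L-lipschitz_on UNIV \<gamma> \<and>
           \<Omega> \<inter> ball x0 r = {x \<in> ball x0 r. x \<bullet> e > \<gamma> (x - (x \<bullet> e) *\<^sub>R e)}))"

definition nonlocal_op :: "'a::euclidean_space set \<Rightarrow> ('a \<Rightarrow> 'a \<Rightarrow> real) \<Rightarrow> ('a \<Rightarrow> real) \<Rightarrow> 'a \<Rightarrow> real" where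
  "nonlocal_op \<Omega> m v x = (LINT y:\<Omega>|lebesgue. m x y * (v y - v x))"

definition in_L1_Linf :: "'a::euclidean_space set \<Rightarrow> ('a \<Rightarrow> real) \<Rightarrow> bool" where
  "in_L1_Linf \<Omega> f \<longleftrightarrow> set_integrable lebesgue \<Omega> f \<and>
      (\<exists>B. AE x in lebesgue. x \<in> \<Omega> \<longrightarrow> \<bar>f x\<bar> \<le> B)"

definition L1_norm :: "'a::euclidean_space set \<Rightarrow> ('a \<Rightarrow> real) \<Rightarrow> real" where
  "L1_norm \<Omega> f = (LINT x:\<Omega>|lebesgue. \<bar>f x\<bar>)"

definition Linf_norm :: "'a::euclidean_space set \<Rightarrow> ('a \<Rightarrow> real) \<Rightarrow> real" where
  "Linf_norm \<Omega> f = Inf {B. AE x in lebesgue. x \<in> \<Omega> \<longrightarrow> \<bar>f x\<bar> \<le> B}"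

definition X_norm :: "'a::euclidean_space set \<Rightarrow> ('a \<Rightarrow> real) \<Rightarrow> real" where
  "X_norm \<Omega> f = L1_norm \<Omega> f + Linf_norm \<Omega> f"

definition L2_norm :: "'a::euclidean_space set \<Rightarrow> ('a \<Rightarrow> real) \<Rightarrow> real" where
  "L2_norm \<Omega> f = sqrt (LINT x:\<Omega>|lebesgue. (f x)\<^sup>2)"

end

theory Submission
  imports Defs
begin

locale dom =
  fixes \<Omega> :: "'n::euclidean_space set"
  assumes Om_open: "open \<Omega>" and Om_bdd: "bounded \<Omega>" and Om_ne: "\<Omega> \<noteq> {}"
begin

abbreviation "L \<equiv> lebesgue_on \<Omega>"

lemma Om_lmeas: "\<Omega> \<in> lmeasurable"
  using lmeasurable_interior[OF Om_bdd] Om_open by (simp add: interior_open)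

lemma Om_sets[simp]: "\<Omega> \<in> sets lebesgue" using Om_lmeas by (simp add: fmeasurableD)

lemma Om_sets'[simp]: "\<Omega> \<inter> space lebesgue \<in> sets lebesgue" by simp

lemma spaceL[simp]: "space L = \<Omega>" by (simp add: space_restrict_space)

sublocale L: finite_measure L by (rule finite_measure_lebesgue_on[OF Om_lmeas])

sublocale LL: pair_sigma_finite L L
  by (simp add: pair_sigma_finite_def L.sigma_finite_measure_axioms)

lemma measL_pos: "0 < measure lebesgue \<Omega>"
  using open_not_negligible[OF Om_open Om_ne] negligible_iff_measure0[OF Om_lmeas]
    measure_nonneg[of lebesgue \<Omega>] by linarith

lemma emL_pos: "emeasure L \<Omega> \<noteq> 0"
proof -
  have "emeasure L \<Omega> = emeasure lebesgue \<Omega>" by (rule emeasure_restrict_space[OF Om_sets' order_refl])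
  also have "\<dots> = ennreal (measure lebesgue \<Omega>)" by (rule emeasure_eq_measure2[OF Om_lmeas])
  finally show ?thesis using measL_pos by simp
qed

lemma not_AE_False: "\<not> (AE x in L. False)"
proof
  assume "AE x in L. False"
  then obtain N where "{x \<in> space L. \<not> False} \<subseteq> N" "emeasure L N = 0" "N \<in> sets L" by (rule AE_E)
  then have "emeasure L \<Omega> \<le> emeasure L N" by (intro emeasure_mono) auto
  with emL_pos \<open>emeasure L N = 0\<close> show False by simp
qed

lemma setint: "(LINT x:\<Omega>|lebesgue. f x) = (\<integral>x. f x \<partial>L)" for f :: "'n \<Rightarrow> real"
  unfolding set_lebesgue_integral_def by (rule integral_restrict_space[OF Om_sets', symmetric])

lemma setintble: "set_integrable lebesgue \<Omega> f \<longleftrightarrow> integrable L f" for f :: "'n \<Rightarrow> real"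
  unfolding set_integrable_def by (rule integrable_restrict_space[OF Om_sets', symmetric])

lemma AEL: "(AE x in lebesgue. x \<in> \<Omega> \<longrightarrow> P x) \<longleftrightarrow> (AE x in L. P x)"
  by (rule AE_restrict_space_iff[OF Om_sets', symmetric])

definition bdd :: "('n \<Rightarrow> real) \<Rightarrow> bool" where
  "bdd f \<longleftrightarrow> f \<in> borel_measurable L \<and> (\<exists>B. AE x in L. \<bar>f x\<bar> \<le> B)"

lemma bdd_integrable: assumes "bdd f" shows "integrable L f"
proof -
  obtain B where "AE x in L. \<bar>f x\<bar> \<le> B" "f \<in> borel_measurable L" using assms unfolding bdd_def by auto
  then show ?thesis by (intro L.integrable_const_bound[where B=B]) auto
qed

lemma in_L1_Linf_iff: "in_L1_Linf \<Omega> f \<longleftrightarrow> bdd f"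
  unfolding in_L1_Linf_def bdd_def setintble AEL
  using bdd_integrable bdd_def by blast

lemma Linf_ae:
  assumes "bdd f"
  shows "AE x in L. \<bar>f x\<bar> \<le> Linf_norm \<Omega> f" and "0 \<le> Linf_norm \<Omega> f"
proof -
  define S where "S = {B. AE x in L. \<bar>f x\<bar> \<le> B}"
  have LS: "Linf_norm \<Omega> f = Inf S" unfolding Linf_norm_def S_def AEL ..
  obtain B0 where B0: "B0 \<in> S" using assms unfolding bdd_def S_def by auto
  have nn: "0 \<le> B" if "B \<in> S" for B
  proof (rule ccontr)
    assume "\<not> 0 \<le> B"
    with that have "AE x in L. False" unfolding S_def by (auto elim!: eventually_mono)
    with not_AE_False show False by simp
  qed
  have bb: "bdd_below S" using nn by (auto simp: bdd_below_def)
  show "0 \<le> Linf_norm \<Omega> f" unfolding LS using B0 nn by (auto intro: cInf_greatest)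
  have "\<forall>n. AE x in L. \<bar>f x\<bar> \<le> Inf S + 1 / Suc n"
  proof
    fix n :: nat
    have "Inf S < Inf S + 1 / Suc n" by simp
    then obtain B where "B \<in> S" "B < Inf S + 1 / Suc n"
      using cInf_less_iff[of S] B0 bb by blast
    then show "AE x in L. \<bar>f x\<bar> \<le> Inf S + 1 / Suc n" unfolding S_def by (auto elim!: eventually_mono)
  qed
  then have "AE x in L. \<forall>n. \<bar>f x\<bar> \<le> Inf S + 1 / Suc n" by (simp add: AE_all_countable)
  then show "AE x in L. \<bar>f x\<bar> \<le> Linf_norm \<Omega> f"
  proof (rule eventually_mono)
    fix x assume H: "\<forall>n. \<bar>f x\<bar> \<le> Inf S + 1 / Suc n"
    show "\<bar>f x\<bar> \<le> Linf_norm \<Omega> f"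
    proof (rule ccontr)
      assume "\<not> ?thesis"
      then have "0 < \<bar>f x\<bar> - Inf S" unfolding LS by simp
      then obtain n where "inverse (real (Suc n)) < \<bar>f x\<bar> - Inf S" using reals_Archimedean by blast
      with H[rule_format, of n] show False by (simp add: field_simps)
    qed
  qed
qed

lemma L1_eq: "L1_norm \<Omega> f = (\<integral>x. \<bar>f x\<bar> \<partial>L)"
  unfolding L1_norm_def setint ..

lemma L1_nonneg: "0 \<le> L1_norm \<Omega> f" unfolding L1_eq by simp

lemma int_prod_bound:
  fixes f g :: "'n \<Rightarrow> real"
  assumes f: "bdd f" and g: "bdd g"
  shows "\<bar>\<integral>x. g x * f x \<partial>L\<bar> \<le> Linf_norm \<Omega> g * L1_norm \<Omega> f"
proof -
  have fi: "integrable L f" "integrable L g" using f g by (auto intro: bdd_integrable)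
  have gm: "g \<in> borel_measurable L" "f \<in> borel_measurable L" using f g by (auto simp: bdd_def)
  obtain Bg where Bg: "AE x in L. \<bar>g x\<bar> \<le> Bg" using g by (auto simp: bdd_def)
  have i1: "integrable L (\<lambda>x. g x * f x)"
  proof -
    have ib: "integrable L (\<lambda>x. Bg * f x)" using fi by simp
    have ae: "AE x in L. norm (g x * f x) \<le> norm (Bg * f x)"
      using Bg by (rule eventually_mono) (auto intro!: mult_right_mono simp: abs_mult)
    show ?thesis by (rule Bochner_Integration.integrable_bound[OF ib _ ae]) (use gm in simp)
  qed
  have "\<bar>\<integral>x. g x * f x \<partial>L\<bar> \<le> (\<integral>x. \<bar>g x * f x\<bar> \<partial>L)" by (rule integral_abs_bound)
  also have "\<dots> \<le> (\<integral>x. Linf_norm \<Omega> g * \<bar>f x\<bar> \<partial>L)"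
    using Linf_ae(1)[OF g] integrable_abs[OF i1] fi
    by (intro integral_mono_AE) (auto simp: abs_mult intro!: mult_right_mono elim!: eventually_mono)
  also have "\<dots> = Linf_norm \<Omega> g * L1_norm \<Omega> f" unfolding L1_eq by simp
  finally show ?thesis .
qed

end

lemma incr_from0:
  fixes F F' :: "real \<Rightarrow> real"
  assumes t: "0 \<le> t" and c0: "(F \<longlongrightarrow> F 0) (at_right 0)"
    and d: "\<And>s. 0 < s \<Longrightarrow> (F has_real_derivative F' s) (at s)"
    and nn: "\<And>s. 0 < s \<Longrightarrow> 0 \<le> F' s"
  shows "F 0 \<le> F t"
proof (cases "t = 0")
  case True then show ?thesis by simp
next
  case False
  then have tp: "0 < t" using t by simp
  have con: "continuous_on {0..t} F"
  proof (rule continuous_on_eq_continuous_within[THEN iffD2], intro ballI)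
    fix x assume x: "x \<in> {0..t}"
    show "continuous (at x within {0..t}) F"
    proof (cases "x = 0")
      case True
      have "(F \<longlongrightarrow> F 0) (at 0 within {0..t})"
        using c0 at_within_Icc_at_right[OF tp] by simp
      then show ?thesis using True by (simp add: continuous_within)
    next
      case False
      then have "0 < x" using x by simp
      from d[OF this] have "isCont F x" by (rule DERIV_isCont)
      then show ?thesis by (rule continuous_at_imp_continuous_at_within)
    qed
  qed
  show ?thesis
    using DERIV_nonneg_imp_increasing_open[OF t _ con] d nn by blast
qed

context dom
begin

lemma bdd_mult: assumes "bdd f" "bdd g" shows "bdd (\<lambda>x. f x * g x)"
proof -
  obtain Bf Bg where Bf: "AE x in L. \<bar>f x\<bar> \<le> Bf" and Bg: "AE x in L. \<bar>g x\<bar> \<le> Bg"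
    and m: "f \<in> borel_measurable L" "g \<in> borel_measurable L" using assms unfolding bdd_def by auto
  have "AE x in L. \<bar>f x * g x\<bar> \<le> Bf * Bg"
    using eventually_conj[OF Bf Bg] by (rule eventually_mono) (auto simp: abs_mult intro!: mult_mono order_trans[OF abs_ge_zero])
  then show ?thesis using m unfolding bdd_def by auto
qed

lemma bdd_add: assumes "bdd f" "bdd g" shows "bdd (\<lambda>x. f x + g x)"
proof -
  obtain Bf Bg where Bf: "AE x in L. \<bar>f x\<bar> \<le> Bf" and Bg: "AE x in L. \<bar>g x\<bar> \<le> Bg"
    and m: "f \<in> borel_measurable L" "g \<in> borel_measurable L" using assms unfolding bdd_def by auto
  have "AE x in L. \<bar>f x + g x\<bar> \<le> Bf + Bg"
    using eventually_conj[OF Bf Bg] by (rule eventually_mono) auto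
  then show ?thesis using m unfolding bdd_def by auto
qed

lemma bdd_const: "bdd (\<lambda>x. c)" unfolding bdd_def by auto

lemma bdd_uminus: assumes "bdd f" shows "bdd (\<lambda>x. - f x)"
  using assms unfolding bdd_def by auto

lemma bdd_diff: assumes "bdd f" "bdd g" shows "bdd (\<lambda>x. f x - g x)"
  using bdd_add[OF assms(1) bdd_uminus[OF assms(2)]] by simp

lemma bdd_cmult: assumes "bdd f" shows "bdd (\<lambda>x. c * f x)"
  using bdd_mult[OF bdd_const assms] .

lemma bdd_div: assumes "bdd f" shows "bdd (\<lambda>x. f x / c)"
  using bdd_mult[OF assms bdd_const[of "1/c"]] by simp

lemma bdd_cong: assumes "bdd f" "g \<in> borel_measurable L" "AE x in L. f x = g x" shows "bdd g"
proof -
  obtain B where B: "AE x in L. \<bar>f x\<bar> \<le> B" using assms unfolding bdd_def by auto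
  have "AE x in L. \<bar>g x\<bar> \<le> B" using eventually_conj[OF B assms(3)] by (rule eventually_mono) auto
  then show ?thesis using assms unfolding bdd_def by auto
qed

lemma Xlim:
  assumes ev: "eventually (\<lambda>s. bdd (f s)) F" and X: "((\<lambda>s. X_norm \<Omega> (f s)) \<longlongrightarrow> 0) F"
  shows "((\<lambda>s. L1_norm \<Omega> (f s)) \<longlongrightarrow> 0) F" and "((\<lambda>s. Linf_norm \<Omega> (f s)) \<longlongrightarrow> 0) F"
proof -
  have e1: "eventually (\<lambda>s. 0 \<le> L1_norm \<Omega> (f s) \<and> L1_norm \<Omega> (f s) \<le> X_norm \<Omega> (f s)) F"
    using ev by (rule eventually_mono) (auto simp: X_norm_def L1_nonneg Linf_ae(2))
  have e2: "eventually (\<lambda>s. 0 \<le> Linf_norm \<Omega> (f s) \<and> Linf_norm \<Omega> (f s) \<le> X_norm \<Omega> (f s)) F"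
    using ev by (rule eventually_mono) (auto simp: X_norm_def L1_nonneg Linf_ae(2))
  show "((\<lambda>s. L1_norm \<Omega> (f s)) \<longlongrightarrow> 0) F"
    by (rule tendsto_sandwich[OF _ _ tendsto_const X]) (use e1 in \<open>auto elim: eventually_mono\<close>)
  show "((\<lambda>s. Linf_norm \<Omega> (f s)) \<longlongrightarrow> 0) F"
    by (rule tendsto_sandwich[OF _ _ tendsto_const X]) (use e2 in \<open>auto elim: eventually_mono\<close>)
qed

lemma int_tendsto0:
  assumes g: "bdd g" and ev: "eventually (\<lambda>s. bdd (f s)) F"
    and l: "((\<lambda>s. L1_norm \<Omega> (f s)) \<longlongrightarrow> 0) F"
  shows "((\<lambda>s. \<integral>x. g x * f s x \<partial>L) \<longlongrightarrow> 0) F"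
proof (rule Lim_null_comparison)
  show "eventually (\<lambda>s. norm (\<integral>x. g x * f s x \<partial>L) \<le> Linf_norm \<Omega> g * L1_norm \<Omega> (f s)) F"
    using ev by (rule eventually_mono) (use int_prod_bound g in auto)
  show "((\<lambda>s. Linf_norm \<Omega> g * L1_norm \<Omega> (f s)) \<longlongrightarrow> 0) F"
    using tendsto_mult_right_zero[OF l] by simp
qed

lemma sq_tendsto0:
  assumes ev: "eventually (\<lambda>s. bdd (f s)) F"
    and l1: "((\<lambda>s. L1_norm \<Omega> (f s)) \<longlongrightarrow> 0) F" and li: "((\<lambda>s. Linf_norm \<Omega> (f s)) \<longlongrightarrow> 0) F"
  shows "((\<lambda>s. \<integral>x. f s x * f s x \<partial>L) \<longlongrightarrow> 0) F"
proof (rule Lim_null_comparison)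
  show "eventually (\<lambda>s. norm (\<integral>x. f s x * f s x \<partial>L) \<le> Linf_norm \<Omega> (f s) * L1_norm \<Omega> (f s)) F"
    using ev proof (rule eventually_mono)
    fix s assume "bdd (f s)"
    then show "norm (\<integral>x. f s x * f s x \<partial>L) \<le> Linf_norm \<Omega> (f s) * L1_norm \<Omega> (f s)"
      using int_prod_bound[of "f s" "f s"] by simp
  qed
  show "((\<lambda>s. Linf_norm \<Omega> (f s) * L1_norm \<Omega> (f s)) \<longlongrightarrow> 0) F"
    using tendsto_mult[OF li l1] by simp
qed

end

lemma sq_id: "h \<noteq> 0 \<Longrightarrow> (a*a)/h - (b*b)/h = 2*(b*c) + 2*(b*((a-b)/h - c)) + h*((c + ((a-b)/h - c))*(c + ((a-b)/h - c)))"
  for a b c h :: real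
  by (simp add: divide_simps) (simp add: algebra_simps)

context dom
begin

lemma bi: "bdd f \<Longrightarrow> bdd g \<Longrightarrow> integrable L (\<lambda>x. f x * g x)"
  by (rule bdd_integrable[OF bdd_mult])

lemma ev_at0: "0 < t \<Longrightarrow> eventually (\<lambda>h::real. h \<noteq> 0 \<and> 0 \<le> t + h) (at 0)"
  unfolding eventually_at by (intro exI[of _ t]) (auto simp: dist_real_def)

lemma deriv_lin:
  fixes u u' :: "real \<Rightarrow> 'n \<Rightarrow> real"
  assumes g: "bdd g" and uX: "\<And>s. 0 \<le> s \<Longrightarrow> bdd (u s)" and u'X: "bdd (u' t)" and t: "0 < t"
    and dq: "((\<lambda>h. X_norm \<Omega> (\<lambda>x. (u (t + h) x - u t x) / h - u' t x)) \<longlongrightarrow> 0) (at 0)"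
  shows "((\<lambda>s. \<integral>x. g x * u s x \<partial>L) has_real_derivative (\<integral>x. g x * u' t x \<partial>L)) (at t)"
proof -
  define D where "D h = (\<lambda>x. (u (t + h) x - u t x) / h - u' t x)" for h
  have ev: "eventually (\<lambda>h::real. h \<noteq> 0 \<and> 0 \<le> t + h) (at 0)" by (rule ev_at0[OF t])
  have evb: "eventually (\<lambda>h. bdd (D h)) (at 0)"
    using ev by (rule eventually_mono) (auto simp: D_def intro!: bdd_diff bdd_div uX u'X t[THEN less_imp_le])
  have X: "((\<lambda>h. X_norm \<Omega> (D h)) \<longlongrightarrow> 0) (at 0)" using dq by (simp add: D_def)
  have I0: "((\<lambda>h. \<integral>x. g x * D h x \<partial>L) \<longlongrightarrow> 0) (at 0)"
    by (rule int_tendsto0[OF g evb Xlim(1)[OF evb X]])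
  have eq: "eventually (\<lambda>h. (\<integral>x. g x * u' t x \<partial>L) + (\<integral>x. g x * D h x \<partial>L) =
      ((\<integral>x. g x * u (t + h) x \<partial>L) - (\<integral>x. g x * u t x \<partial>L)) / h) (at 0)"
    using ev
  proof (rule eventually_mono)
    fix h :: real assume h: "h \<noteq> 0 \<and> 0 \<le> t + h"
    have i1: "integrable L (\<lambda>x. g x * u (t + h) x)" using h by (intro bi g uX) auto
    have i2: "integrable L (\<lambda>x. g x * u t x)" using t by (intro bi g uX) auto
    have i3: "integrable L (\<lambda>x. g x * u' t x)" by (intro bi g u'X)
    have pw: "g x * D h x = g x * u (t + h) x / h - g x * u t x / h - g x * u' t x" for x
      using h by (simp add: D_def field_simps)
    have "(\<integral>x. g x * D h x \<partial>L) = (\<integral>x. g x * u (t + h) x / h - g x * u t x / h - g x * u' t x \<partial>L)"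
      by (simp add: pw)
    also have "\<dots> = (\<integral>x. g x * u (t + h) x \<partial>L) / h - (\<integral>x. g x * u t x \<partial>L) / h - (\<integral>x. g x * u' t x \<partial>L)"
      using i1 i2 i3 by (simp add: integral_diff)
    finally show "(\<integral>x. g x * u' t x \<partial>L) + (\<integral>x. g x * D h x \<partial>L) =
      ((\<integral>x. g x * u (t + h) x \<partial>L) - (\<integral>x. g x * u t x \<partial>L)) / h"
      by (simp add: diff_divide_distrib)
  qed
  have "((\<lambda>h. (\<integral>x. g x * u' t x \<partial>L) + (\<integral>x. g x * D h x \<partial>L)) \<longlongrightarrow> (\<integral>x. g x * u' t x \<partial>L) + 0) (at 0)"
    by (intro tendsto_add tendsto_const I0)
  then have "((\<lambda>h. ((\<integral>x. g x * u (t + h) x \<partial>L) - (\<integral>x. g x * u t x \<partial>L)) / h) \<longlongrightarrow> (\<integral>x. g x * u' t x \<partial>L)) (at 0)"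
    using tendsto_cong[OF eq] by simp
  then show ?thesis unfolding DERIV_def .
qed

lemma deriv_sq:
  fixes u u' :: "real \<Rightarrow> 'n \<Rightarrow> real"
  assumes uX: "\<And>s. 0 \<le> s \<Longrightarrow> bdd (u s)" and u'X: "bdd (u' t)" and t: "0 < t"
    and dq: "((\<lambda>h. X_norm \<Omega> (\<lambda>x. (u (t + h) x - u t x) / h - u' t x)) \<longlongrightarrow> 0) (at 0)"
  shows "((\<lambda>s. \<integral>x. u s x * u s x \<partial>L) has_real_derivative 2 * (\<integral>x. u t x * u' t x \<partial>L)) (at t)"
proof -
  define D where "D h = (\<lambda>x. (u (t + h) x - u t x) / h - u' t x)" for h
  have ev: "eventually (\<lambda>h::real. h \<noteq> 0 \<and> 0 \<le> t + h) (at 0)" by (rule ev_at0[OF t])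
  have ut: "bdd (u t)" using t by (intro uX) auto
  have evb: "eventually (\<lambda>h. bdd (D h)) (at 0)"
    using ev by (rule eventually_mono) (auto simp: D_def intro!: bdd_diff bdd_div uX u'X t[THEN less_imp_le])
  have X: "((\<lambda>h. X_norm \<Omega> (D h)) \<longlongrightarrow> 0) (at 0)" using dq by (simp add: D_def)
  note l1 = Xlim(1)[OF evb X] and li = Xlim(2)[OF evb X]
  have I1: "((\<lambda>h. \<integral>x. u t x * D h x \<partial>L) \<longlongrightarrow> 0) (at 0)" by (rule int_tendsto0[OF ut evb l1])
  have I2: "((\<lambda>h. \<integral>x. u' t x * D h x \<partial>L) \<longlongrightarrow> 0) (at 0)" by (rule int_tendsto0[OF u'X evb l1])
  have I3: "((\<lambda>h. \<integral>x. D h x * D h x \<partial>L) \<longlongrightarrow> 0) (at 0)" by (rule sq_tendsto0[OF evb l1 li])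
  define R where "R h = (\<integral>x. u' t x * u' t x \<partial>L) + 2 * (\<integral>x. u' t x * D h x \<partial>L) + (\<integral>x. D h x * D h x \<partial>L)" for h
  have RL: "(R \<longlongrightarrow> (\<integral>x. u' t x * u' t x \<partial>L) + 2 * 0 + 0) (at 0)"
    unfolding R_def by (intro tendsto_add tendsto_mult tendsto_const I2 I3)
  have "((\<lambda>h. 2 * (\<integral>x. u t x * u' t x \<partial>L) + 2 * (\<integral>x. u t x * D h x \<partial>L) + h * R h) \<longlongrightarrow>
      2 * (\<integral>x. u t x * u' t x \<partial>L) + 2 * 0 + 0 * ((\<integral>x. u' t x * u' t x \<partial>L) + 2 * 0 + 0)) (at 0)"
    by (intro tendsto_add tendsto_mult tendsto_const I1 RL tendsto_ident_at)
  then have L: "((\<lambda>h. 2 * (\<integral>x. u t x * u' t x \<partial>L) + 2 * (\<integral>x. u t x * D h x \<partial>L) + h * R h) \<longlongrightarrow>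
      2 * (\<integral>x. u t x * u' t x \<partial>L)) (at 0)" by simp
  have eq: "eventually (\<lambda>h. 2 * (\<integral>x. u t x * u' t x \<partial>L) + 2 * (\<integral>x. u t x * D h x \<partial>L) + h * R h =
      ((\<integral>x. u (t + h) x * u (t + h) x \<partial>L) - (\<integral>x. u t x * u t x \<partial>L)) / h) (at 0)"
    using eventually_conj[OF ev evb]
  proof (rule eventually_mono)
    fix h :: real assume h: "(h \<noteq> 0 \<and> 0 \<le> t + h) \<and> bdd (D h)"
    have uh: "bdd (u (t + h))" using h by (intro uX) auto
    have Dh: "bdd (D h)" using h by simp
    have i1: "integrable L (\<lambda>x. u (t + h) x * u (t + h) x)" by (intro bi uh)
    have i2: "integrable L (\<lambda>x. u t x * u t x)" by (intro bi ut)
    have i3: "integrable L (\<lambda>x. u t x * u' t x)" by (intro bi ut u'X)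
    have i4: "integrable L (\<lambda>x. u t x * D h x)" by (intro bi ut Dh)
    have i5: "integrable L (\<lambda>x. u' t x * u' t x)" by (intro bi u'X)
    have i6: "integrable L (\<lambda>x. u' t x * D h x)" by (intro bi u'X Dh)
    have i7: "integrable L (\<lambda>x. D h x * D h x)" by (intro bi Dh)
    have pw: "(u (t + h) x * u (t + h) x) / h - (u t x * u t x) / h =
       2 * (u t x * u' t x) + 2 * (u t x * D h x) + h * ((u' t x * u' t x) + 2 * (u' t x * D h x) + D h x * D h x)" for x
      using sq_id[of h "u (t + h) x" "u t x" "u' t x"] h by (simp add: D_def algebra_simps)
    have "((\<integral>x. u (t + h) x * u (t + h) x \<partial>L) - (\<integral>x. u t x * u t x \<partial>L)) / h =
        (\<integral>x. (u (t + h) x * u (t + h) x) / h - (u t x * u t x) / h \<partial>L)"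
      using i1 i2 by (simp add: integral_diff diff_divide_distrib)
    also have "\<dots> = (\<integral>x. 2 * (u t x * u' t x) + 2 * (u t x * D h x) + h * ((u' t x * u' t x) + 2 * (u' t x * D h x) + D h x * D h x) \<partial>L)"
      by (simp add: pw)
    also have "\<dots> = 2 * (\<integral>x. u t x * u' t x \<partial>L) + 2 * (\<integral>x. u t x * D h x \<partial>L) + h * R h"
      using i3 i4 i5 i6 i7 by (simp add: R_def integral_add)
    finally show "2 * (\<integral>x. u t x * u' t x \<partial>L) + 2 * (\<integral>x. u t x * D h x \<partial>L) + h * R h =
      ((\<integral>x. u (t + h) x * u (t + h) x \<partial>L) - (\<integral>x. u t x * u t x \<partial>L)) / h" by simp
  qed
  from L tendsto_cong[OF eq] show ?thesis unfolding DERIV_def by simp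
qed

lemma cont_lin:
  fixes u :: "real \<Rightarrow> 'n \<Rightarrow> real"
  assumes g: "bdd g" and uX: "\<And>s. 0 \<le> s \<Longrightarrow> bdd (u s)"
    and c: "((\<lambda>s. X_norm \<Omega> (\<lambda>x. u s x - u 0 x)) \<longlongrightarrow> 0) (at_right 0)"
  shows "((\<lambda>s. \<integral>x. g x * u s x \<partial>L) \<longlongrightarrow> (\<integral>x. g x * u 0 x \<partial>L)) (at_right 0)"
proof -
  define E where "E s = (\<lambda>x. u s x - u 0 x)" for s
  have ev: "eventually (\<lambda>s::real. 0 < s) (at_right 0)" by (simp add: eventually_at_right_less)
  have evb: "eventually (\<lambda>s. bdd (E s)) (at_right 0)"
    using ev by (rule eventually_mono) (auto simp: E_def intro!: bdd_diff uX)
  have X: "((\<lambda>s. X_norm \<Omega> (E s)) \<longlongrightarrow> 0) (at_right 0)" using c by (simp add: E_def)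
  have I: "((\<lambda>s. \<integral>x. g x * E s x \<partial>L) \<longlongrightarrow> 0) (at_right 0)"
    by (rule int_tendsto0[OF g evb Xlim(1)[OF evb X]])
  have eq: "eventually (\<lambda>s. (\<integral>x. g x * u 0 x \<partial>L) + (\<integral>x. g x * E s x \<partial>L) = (\<integral>x. g x * u s x \<partial>L)) (at_right 0)"
    using ev
  proof (rule eventually_mono)
    fix s :: real assume s: "0 < s"
    have i1: "integrable L (\<lambda>x. g x * u s x)" using s by (intro bi g uX) auto
    have i2: "integrable L (\<lambda>x. g x * u 0 x)" by (intro bi g uX) auto
    show "(\<integral>x. g x * u 0 x \<partial>L) + (\<integral>x. g x * E s x \<partial>L) = (\<integral>x. g x * u s x \<partial>L)"
      using i1 i2 by (simp add: E_def right_diff_distrib integral_diff)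
  qed
  have "((\<lambda>s. (\<integral>x. g x * u 0 x \<partial>L) + (\<integral>x. g x * E s x \<partial>L)) \<longlongrightarrow> (\<integral>x. g x * u 0 x \<partial>L) + 0) (at_right 0)"
    by (intro tendsto_add tendsto_const I)
  with tendsto_cong[OF eq] show ?thesis by simp
qed

lemma cont_sq:
  fixes u :: "real \<Rightarrow> 'n \<Rightarrow> real"
  assumes uX: "\<And>s. 0 \<le> s \<Longrightarrow> bdd (u s)"
    and c: "((\<lambda>s. X_norm \<Omega> (\<lambda>x. u s x - u 0 x)) \<longlongrightarrow> 0) (at_right 0)"
  shows "((\<lambda>s. \<integral>x. u s x * u s x \<partial>L) \<longlongrightarrow> (\<integral>x. u 0 x * u 0 x \<partial>L)) (at_right 0)"
proof -
  define E where "E s = (\<lambda>x. u s x - u 0 x)" for s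
  have u0: "bdd (u 0)" by (intro uX) auto
  have ev: "eventually (\<lambda>s::real. 0 < s) (at_right 0)" by (simp add: eventually_at_right_less)
  have evb: "eventually (\<lambda>s. bdd (E s)) (at_right 0)"
    using ev by (rule eventually_mono) (auto simp: E_def intro!: bdd_diff uX)
  have X: "((\<lambda>s. X_norm \<Omega> (E s)) \<longlongrightarrow> 0) (at_right 0)" using c by (simp add: E_def)
  have I: "((\<lambda>s. \<integral>x. u 0 x * E s x \<partial>L) \<longlongrightarrow> 0) (at_right 0)"
    by (rule int_tendsto0[OF u0 evb Xlim(1)[OF evb X]])
  have I2: "((\<lambda>s. \<integral>x. E s x * E s x \<partial>L) \<longlongrightarrow> 0) (at_right 0)"
    by (rule sq_tendsto0[OF evb Xlim(1)[OF evb X] Xlim(2)[OF evb X]])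
  have eq: "eventually (\<lambda>s. (\<integral>x. u 0 x * u 0 x \<partial>L) + 2 * (\<integral>x. u 0 x * E s x \<partial>L) + (\<integral>x. E s x * E s x \<partial>L)
      = (\<integral>x. u s x * u s x \<partial>L)) (at_right 0)"
    using eventually_conj[OF ev evb]
  proof (rule eventually_mono)
    fix s :: real assume s: "0 < s \<and> bdd (E s)"
    have i1: "integrable L (\<lambda>x. u 0 x * u 0 x)" by (intro bi u0)
    have i2: "integrable L (\<lambda>x. u 0 x * E s x)" using s by (intro bi u0) auto
    have i3: "integrable L (\<lambda>x. E s x * E s x)" using s by (intro bi) auto
    have pw: "u s x * u s x = u 0 x * u 0 x + 2 * (u 0 x * E s x) + E s x * E s x" for x
      by (simp add: E_def algebra_simps)
    show "(\<integral>x. u 0 x * u 0 x \<partial>L) + 2 * (\<integral>x. u 0 x * E s x \<partial>L) + (\<integral>x. E s x * E s x \<partial>L)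
      = (\<integral>x. u s x * u s x \<partial>L)"
      using i1 i2 i3 by (simp add: pw integral_add)
  qed
  have "((\<lambda>s. (\<integral>x. u 0 x * u 0 x \<partial>L) + 2 * (\<integral>x. u 0 x * E s x \<partial>L) + (\<integral>x. E s x * E s x \<partial>L))
      \<longlongrightarrow> (\<integral>x. u 0 x * u 0 x \<partial>L) + 2 * 0 + 0) (at_right 0)"
    by (intro tendsto_add tendsto_mult tendsto_const I I2)
  with tendsto_cong[OF eq] show ?thesis by simp
qed

end

context dom
begin

lemma dense_seq:
  obtains d :: "nat \<Rightarrow> 'n" where "\<And>j. d j \<in> \<Omega>" and "\<And>x e. x \<in> \<Omega> \<Longrightarrow> 0 < e \<Longrightarrow> \<exists>j. dist x (d j) < e"
proof -
  obtain B :: "'n set set" where Bc: "countable B" and Bb: "topological_basis B"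
    using ex_countable_basis by blast
  define D where "D = (\<lambda>b. SOME z. z \<in> b) ` {b\<in>B. b \<noteq> {} \<and> b \<subseteq> \<Omega>}"
  have Dc: "countable D" unfolding D_def using Bc by auto
  have DO: "D \<subseteq> \<Omega>" by (auto simp: D_def) (metis someI subsetD)
  have dense: "\<exists>z\<in>D. dist x z < e" if x: "x \<in> \<Omega>" and e: "0 < e" for x e
  proof -
    have "open (ball x e \<inter> \<Omega>)" "x \<in> ball x e \<inter> \<Omega>" using Om_open x e by auto
    then obtain b where b: "b \<in> B" "x \<in> b" "b \<subseteq> ball x e \<inter> \<Omega>" using topological_basisE[OF Bb] by metis
    then have "(SOME z. z \<in> b) \<in> b" by (auto intro: someI_ex)
    moreover have "(SOME z. z \<in> b) \<in> D" unfolding D_def using b by auto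
    ultimately show ?thesis using b by (intro bexI[of _ "SOME z. z \<in> b"]) (auto simp: dist_commute)
  qed
  have Dne: "D \<noteq> {}" using dense[of _ 1] Om_ne by force
  define d where "d = from_nat_into D"
  have rd: "range d = D" unfolding d_def using Dne Dc by simp
  show ?thesis
  proof
    show "d j \<in> \<Omega>" for j using rd DO by auto
    show "\<exists>j. dist x (d j) < e" if "x \<in> \<Omega>" "0 < e" for x e
      using dense[OF that] rd by (metis imageE)
  qed
qed

lemma construct_G:
  fixes m :: "'n \<Rightarrow> 'n \<Rightarrow> real"
  assumes m_nonneg: "\<forall>x\<in>\<Omega>. \<forall>y\<in>\<Omega>. 0 \<le> m x y"
    and m_sym: "\<forall>x\<in>\<Omega>. \<forall>y\<in>\<Omega>. m x y = m y x"
    and m_meas: "\<forall>x\<in>\<Omega>. (\<lambda>y. m x y) \<in> borel_measurable L"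
    and m_cont: "AE y in L. continuous_on \<Omega> (\<lambda>x. m x y)"
  obtains G N where "G \<in> borel_measurable (L \<Otimes>\<^sub>M L)" "N \<in> null_sets L"
    "\<And>x y. G (x, y) = G (y, x)" "\<And>x y. 0 \<le> G (x, y)"
    "\<And>x y. x \<in> \<Omega> - N \<Longrightarrow> y \<in> \<Omega> - N \<Longrightarrow> G (x, y) = m x y"
    "\<And>x y. x \<notin> \<Omega> - N \<Longrightarrow> G (x, y) = 0"
proof -
  obtain d :: "nat \<Rightarrow> 'n" where dO: "\<And>j. d j \<in> \<Omega>" and dd: "\<And>x e. x \<in> \<Omega> \<Longrightarrow> 0 < e \<Longrightarrow> \<exists>j. dist x (d j) < e"
    using dense_seq by blast
  obtain N where N: "{y \<in> space L. \<not> continuous_on \<Omega> (\<lambda>x. m x y)} \<subseteq> N" "emeasure L N = 0" "N \<in> sets L"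
    using m_cont by (rule AE_E)
  have Nnull: "N \<in> null_sets L" using N by auto
  define jn where "jn n x = (LEAST j. dist x (d j) < 1 / Suc n)" for n x
  have jn_prop: "dist x (d (jn n x)) < 1 / Suc n" if "x \<in> \<Omega>" for x n
  proof -
    have "\<exists>j. dist x (d j) < 1 / Suc n" using dd[OF that] by simp
    then show ?thesis unfolding jn_def by (rule LeastI_ex)
  qed
  have distm: "(\<lambda>x. dist x c) \<in> borel_measurable L" for c :: 'n
    by (rule continuous_imp_measurable_on_sets_lebesgue) (auto intro!: continuous_intros)
  have jn_meas: "jn n \<in> measurable L (count_space UNIV)" for n
    unfolding jn_def
  proof (rule measurable_Least)
    fix i
    have [measurable]: "(\<lambda>x. dist x (d i)) \<in> borel_measurable L" by (rule distm)
    show "(\<lambda>x. dist x (d i) < 1 / Suc n) \<in> measurable L (count_space UNIV)" by measurable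
  qed
  define mn where "mn n z = m (d (jn n (fst z))) (snd z)" for n z
  have mn_meas: "mn n \<in> borel_measurable (L \<Otimes>\<^sub>M L)" for n
    unfolding mn_def
  proof (rule measurable_compose_countable[where f="\<lambda>j z. m (d j) (snd z)" and g="\<lambda>z. jn n (fst z)"])
    fix j :: nat
    show "(\<lambda>z. m (d j) (snd z)) \<in> borel_measurable (L \<Otimes>\<^sub>M L)"
      by (rule measurable_compose[OF measurable_snd m_meas[rule_format, OF dO[of j]]])
    show "(\<lambda>z. jn n (fst z)) \<in> measurable (L \<Otimes>\<^sub>M L) (count_space UNIV)"
      by (rule measurable_compose[OF measurable_fst jn_meas])
  qed
  define mt where "mt z = lim (\<lambda>n. mn n z)" for z
  have mt_meas: "mt \<in> borel_measurable (L \<Otimes>\<^sub>M L)"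
    unfolding mt_def by (rule borel_measurable_lim_metric[OF mn_meas])
  have mt_eq: "mt (x, y) = m x y" if x: "x \<in> \<Omega>" and y: "y \<in> \<Omega> - N" for x y
  proof -
    have cont: "continuous_on \<Omega> (\<lambda>x. m x y)" using N(1) y by auto
    have dl: "(\<lambda>n. d (jn n x)) \<longlonglongrightarrow> x"
    proof (subst tendsto_dist_iff, rule Lim_null_comparison)
      show "\<forall>\<^sub>F n in sequentially. norm (dist (d (jn n x)) x) \<le> 1 / Suc n"
        using jn_prop[OF x] by (auto simp: dist_commute less_imp_le)
      show "(\<lambda>n. 1 / real (Suc n)) \<longlonglongrightarrow> 0" using LIMSEQ_inverse_real_of_nat by (simp add: inverse_eq_divide)
    qed
    have "(\<lambda>n. m (d (jn n x)) y) \<longlonglongrightarrow> m x y"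
      by (rule continuous_on_tendsto_compose[OF cont dl x]) (use dO in auto)
    then show ?thesis unfolding mt_def mn_def by (simp add: limI)
  qed
  define G where "G z = indicator (\<Omega> - N) (fst z) * indicator (\<Omega> - N) (snd z) * mt z" for z :: "'n \<times> 'n"
  have ON: "\<Omega> - N \<in> sets L" using N(3) by (metis sets.Diff sets.top spaceL)
  show ?thesis
  proof
    show "G \<in> borel_measurable (L \<Otimes>\<^sub>M L)"
      unfolding G_def using ON mt_meas by measurable
    show "N \<in> null_sets L" by (rule Nnull)
    show "G (x, y) = G (y, x)" for x y
    proof (cases "x \<in> \<Omega> - N \<and> y \<in> \<Omega> - N")
      case True
      then have "mt (x, y) = m x y" "mt (y, x) = m y x" "m x y = m y x" using mt_eq m_sym by auto
      then show ?thesis unfolding G_def using True by simp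
    next
      case False
      then show ?thesis unfolding G_def by (auto simp: indicator_def)
    qed
    show "0 \<le> G (x, y)" for x y
      unfolding G_def using mt_eq m_nonneg by (auto simp: indicator_def)
    show "G (x, y) = m x y" if "x \<in> \<Omega> - N" "y \<in> \<Omega> - N" for x y
      unfolding G_def using mt_eq that by (auto simp: indicator_def)
    show "G (x, y) = 0" if "x \<notin> \<Omega> - N" for x y
      unfolding G_def using that by (auto simp: indicator_def)
  qed
qed

end

locale kernG = dom \<Omega> for \<Omega> :: "'n::euclidean_space set" +
  fixes m :: "'n \<Rightarrow> 'n \<Rightarrow> real" and G :: "'n \<times> 'n \<Rightarrow> real" and N :: "'n set" and Hb :: real
  assumes G_meas[measurable]: "G \<in> borel_measurable (lebesgue_on \<Omega> \<Otimes>\<^sub>M lebesgue_on \<Omega>)"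
    and N_null: "N \<in> null_sets (lebesgue_on \<Omega>)"
    and G_sym: "\<And>x y. G (x, y) = G (y, x)" and G_nn: "\<And>x y. 0 \<le> G (x, y)"
    and G_eq: "\<And>x y. x \<in> \<Omega> - N \<Longrightarrow> y \<in> \<Omega> - N \<Longrightarrow> G (x, y) = m x y"
    and G_0: "\<And>x y. x \<notin> \<Omega> - N \<Longrightarrow> G (x, y) = 0"
    and m_meas: "\<And>x. x \<in> \<Omega> \<Longrightarrow> (\<lambda>y. m x y) \<in> borel_measurable (lebesgue_on \<Omega>)"
    and m_bnd: "\<And>x. x \<in> \<Omega> \<Longrightarrow> (\<integral>\<^sup>+y. ennreal (m x y) \<partial>lebesgue_on \<Omega>) \<le> ennreal Hb"
    and Hb_nn: "0 \<le> Hb"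
begin

definition hh :: "'n \<Rightarrow> real" where "hh x = (\<integral>y. G (x, y) \<partial>L)"
definition II :: "('n \<Rightarrow> real) \<Rightarrow> 'n \<Rightarrow> real" where "II f x = (\<integral>y. G (x, y) * f y \<partial>L)"

lemma Gsec_meas[measurable]: "(\<lambda>y. G (x, y)) \<in> borel_measurable L"
proof (cases "x \<in> \<Omega>")
  case True
  then show ?thesis using measurable_Pair2[OF G_meas, of x] by simp
next
  case False
  then have "(\<lambda>y. G (x, y)) = (\<lambda>y. 0)" using G_0 by auto
  then show ?thesis by simp
qed

lemma aux_mono: "0 \<le> g \<Longrightarrow> a \<le> B \<Longrightarrow> g * a \<le> B * (g::real)"
  by (simp add: mult.commute mult_right_mono)

lemma AE_notN: "AE x in L. x \<in> \<Omega> - N"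
  using eventually_conj[OF AE_not_in[OF N_null] AE_space] by (rule eventually_mono) simp

lemma G_ae: assumes "x \<in> \<Omega> - N" shows "AE y in L. G (x, y) = m x y"
  using AE_notN by (rule eventually_mono) (use G_eq assms in auto)

lemma Gsec_nn: "(\<integral>\<^sup>+y. ennreal (G (x, y)) \<partial>L) \<le> ennreal Hb"
proof (cases "x \<in> \<Omega> - N")
  case True
  have "(\<integral>\<^sup>+y. ennreal (G (x, y)) \<partial>L) = (\<integral>\<^sup>+y. ennreal (m x y) \<partial>L)"
    using G_ae[OF True] by (intro nn_integral_cong_AE) (auto elim!: eventually_mono)
  also have "\<dots> \<le> ennreal Hb" using m_bnd True by auto
  finally show ?thesis .
next
  case False
  then show ?thesis using G_0 by simp
qed

lemma Gsec_int: "integrable L (\<lambda>y. G (x, y))"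
proof (rule integrableI_nonneg)
  show "AE y in L. 0 \<le> G (x, y)" using G_nn by simp
  show "(\<integral>\<^sup>+y. ennreal (G (x, y)) \<partial>L) < \<infinity>"
    using le_less_trans[OF Gsec_nn ennreal_less_top] by simp
qed simp

lemma hh_nn: "0 \<le> hh x" unfolding hh_def using G_nn by simp

lemma hh_le: "hh x \<le> Hb"
proof -
  have "ennreal (hh x) = (\<integral>\<^sup>+y. ennreal (G (x, y)) \<partial>L)"
    unfolding hh_def by (rule nn_integral_eq_integral[symmetric]) (use Gsec_int G_nn in auto)
  also have "\<dots> \<le> ennreal Hb" by (rule Gsec_nn)
  finally show ?thesis using Hb_nn by simp
qed

lemma bdd_nnB: assumes "bdd f" obtains B where "0 \<le> B" "AE x in L. \<bar>f x\<bar> \<le> B"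
proof -
  obtain B where "AE x in L. \<bar>f x\<bar> \<le> B" using assms unfolding bdd_def by auto
  then have "AE x in L. \<bar>f x\<bar> \<le> max B 0" by (rule eventually_mono) auto
  then show ?thesis using that[of "max B 0"] by auto
qed

lemma II_int: assumes "bdd f" shows "integrable L (\<lambda>y. G (x, y) * f y)"
proof -
  obtain B where B: "0 \<le> B" "AE x in L. \<bar>f x\<bar> \<le> B" using bdd_nnB[OF assms] .
  have fm: "f \<in> borel_measurable L" using assms by (simp add: bdd_def)
  have ib: "integrable L (\<lambda>y. B * G (x, y))" using Gsec_int by simp
  have ae: "AE y in L. norm (G (x, y) * f y) \<le> norm (B * G (x, y))"
    using B(2) by (rule eventually_mono) (use G_nn B(1) in \<open>auto simp: abs_mult intro!: aux_mono\<close>)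
  show ?thesis by (rule Bochner_Integration.integrable_bound[OF ib _ ae]) (use fm in simp)
qed

lemma II_bound: assumes "bdd f" "0 \<le> B" "AE x in L. \<bar>f x\<bar> \<le> B" shows "\<bar>II f x\<bar> \<le> B * Hb"
proof -
  have "\<bar>II f x\<bar> \<le> (\<integral>y. \<bar>G (x, y) * f y\<bar> \<partial>L)" unfolding II_def by (rule integral_abs_bound)
  also have "\<dots> \<le> (\<integral>y. B * G (x, y) \<partial>L)"
    using assms(3) integrable_abs[OF II_int[OF assms(1), of x]] Gsec_int
    by (intro integral_mono_AE) (auto elim!: eventually_mono simp: abs_mult G_nn intro!: aux_mono)
  also have "\<dots> = B * hh x" unfolding hh_def by simp
  also have "\<dots> \<le> B * Hb" using hh_le assms(2) by (simp add: mult_left_mono)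
  finally show ?thesis .
qed

lemma II_meas: assumes "f \<in> borel_measurable L" shows "II f \<in> borel_measurable L"
proof -
  note [measurable] = assms
  have "(\<lambda>(x, y). G (x, y) * f y) \<in> borel_measurable (L \<Otimes>\<^sub>M L)" by measurable
  then show ?thesis unfolding II_def by (rule L.borel_measurable_lebesgue_integral)
qed

lemma hh_meas: "hh \<in> borel_measurable L"
proof -
  have "(\<lambda>(x, y). G (x, y)) \<in> borel_measurable (L \<Otimes>\<^sub>M L)" by measurable
  then show ?thesis unfolding hh_def by (rule L.borel_measurable_lebesgue_integral)
qed

lemma bdd_II: assumes "bdd f" shows "bdd (II f)"
proof -
  obtain B where B: "0 \<le> B" "AE x in L. \<bar>f x\<bar> \<le> B" using bdd_nnB[OF assms] .
  show ?thesis unfolding bdd_def using II_meas[of f] assms II_bound[OF assms B]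
    by (auto simp: bdd_def)
qed

lemma bdd_hh: "bdd hh"
  unfolding bdd_def using hh_meas hh_nn hh_le by (intro conjI exI[of _ Hb]) auto

lemma II_cong: assumes "f \<in> borel_measurable L" "g \<in> borel_measurable L" "AE y in L. f y = g y"
  shows "II f x = II g x"
  unfolding II_def using assms by (intro integral_cong_AE) (auto elim!: eventually_mono)

lemma NL: assumes x: "x \<in> \<Omega> - N" and f: "bdd f"
  shows "nonlocal_op \<Omega> m f x = II f x - f x * hh x"
proof -
  have fm: "f \<in> borel_measurable L" using f by (simp add: bdd_def)
  have "nonlocal_op \<Omega> m f x = (\<integral>y. m x y * (f y - f x) \<partial>L)"
    unfolding nonlocal_op_def setint ..
  also have "\<dots> = (\<integral>y. G (x, y) * f y - f x * G (x, y) \<partial>L)"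
    using G_ae[OF x] m_meas[of x] x fm
    by (intro integral_cong_AE) (auto elim!: eventually_mono simp: algebra_simps)
  also have "\<dots> = II f x - f x * hh x"
    unfolding II_def hh_def using II_int[OF f] Gsec_int by (simp add: integral_diff)
  finally show ?thesis .
qed

lemma G_prod_int: "integrable (L \<Otimes>\<^sub>M L) G"
proof (rule integrableI_nonneg)
  show "G \<in> borel_measurable (L \<Otimes>\<^sub>M L)" by measurable
  show "AE z in L \<Otimes>\<^sub>M L. 0 \<le> G z" using G_nn by (auto intro!: AE_I2 simp: split_paired_all)
  have "(\<integral>\<^sup>+z. ennreal (G z) \<partial>(L \<Otimes>\<^sub>M L)) = (\<integral>\<^sup>+x. \<integral>\<^sup>+y. ennreal (G (x, y)) \<partial>L \<partial>L)"
    by (rule L.nn_integral_fst[symmetric]) measurable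
  also have "\<dots> \<le> (\<integral>\<^sup>+x. ennreal Hb \<partial>L)" by (intro nn_integral_mono Gsec_nn)
  also have "\<dots> < \<infinity>" using L.emeasure_finite[of \<Omega>] by (simp add: ennreal_mult_eq_top_iff less_top[symmetric])
  finally show "(\<integral>\<^sup>+z. ennreal (G z) \<partial>(L \<Otimes>\<^sub>M L)) < \<infinity>" .
qed

lemma H_int: assumes f: "bdd f" and g: "bdd g"
  shows "integrable (L \<Otimes>\<^sub>M L) (\<lambda>z. g (fst z) * G z * f (snd z))"
proof -
  obtain Bf where Bf: "0 \<le> Bf" "AE x in L. \<bar>f x\<bar> \<le> Bf" using bdd_nnB[OF f] .
  obtain Bg where Bg: "0 \<le> Bg" "AE x in L. \<bar>g x\<bar> \<le> Bg" using bdd_nnB[OF g] .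
  have fm[measurable]: "f \<in> borel_measurable L" using f by (simp add: bdd_def)
  have gm[measurable]: "g \<in> borel_measurable L" using g by (simp add: bdd_def)
  have ib: "integrable (L \<Otimes>\<^sub>M L) (\<lambda>z. Bg * Bf * G z)" using G_prod_int by simp
  have ae: "AE z in L \<Otimes>\<^sub>M L. \<bar>g (fst z)\<bar> \<le> Bg \<and> \<bar>f (snd z)\<bar> \<le> Bf"
  proof (rule LL.AE_pair_measure)
    show "{z \<in> space (L \<Otimes>\<^sub>M L). \<bar>g (fst z)\<bar> \<le> Bg \<and> \<bar>f (snd z)\<bar> \<le> Bf} \<in> sets (L \<Otimes>\<^sub>M L)" by measurable
    show "AE x in L. AE y in L. \<bar>g (fst (x, y))\<bar> \<le> Bg \<and> \<bar>f (snd (x, y))\<bar> \<le> Bf"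
      using Bg(2) by (rule eventually_mono) (use Bf(2) in \<open>auto elim!: eventually_mono\<close>)
  qed
  have ae2: "AE z in L \<Otimes>\<^sub>M L. norm (g (fst z) * G z * f (snd z)) \<le> norm (Bg * Bf * G z)"
    using ae
  proof (rule eventually_mono)
    fix z assume z: "\<bar>g (fst z)\<bar> \<le> Bg \<and> \<bar>f (snd z)\<bar> \<le> Bf"
    have "\<bar>g (fst z)\<bar> * \<bar>f (snd z)\<bar> \<le> Bg * Bf" using z Bf Bg by (intro mult_mono) auto
    then have "\<bar>g (fst z)\<bar> * \<bar>f (snd z)\<bar> * G z \<le> Bg * Bf * G z" using G_nn[of "fst z" "snd z"]
      by (intro mult_right_mono) auto
    then show "norm (g (fst z) * G z * f (snd z)) \<le> norm (Bg * Bf * G z)"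
      using G_nn[of "fst z" "snd z"] Bf Bg by (simp add: abs_mult ac_simps)
  qed
  show ?thesis by (rule Bochner_Integration.integrable_bound[OF ib _ ae2]) measurable
qed

end

lemma amgm_aux:
  fixes a b g p q :: real
  assumes g: "0 \<le> g" and p: "0 < p" and q: "0 < q"
  shows "a * g * b \<le> g * (a * a) * q / p / 2 + g * (b * b) * p / q / 2"
proof -
  have "0 \<le> (a * q - b * p) * (a * q - b * p)" by simp
  then have "2 * (a * b) * (p * q) \<le> a * a * q * q + b * b * p * p" by (simp add: algebra_simps)
  then have "a * b \<le> (a * a * q * q + b * b * p * p) / (2 * (p * q))"
    using p q by (simp add: field_simps)
  also have "\<dots> = (a * a) * q / p / 2 + (b * b) * p / q / 2" using p q by (simp add: field_simps)
  finally have "a * b \<le> (a * a) * q / p / 2 + (b * b) * p / q / 2" .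
  then have "g * (a * b) \<le> g * ((a * a) * q / p / 2 + (b * b) * p / q / 2)" using g by (rule mult_left_mono)
  then show ?thesis by (simp add: algebra_simps)
qed

context kernG
begin

lemma II_pull: "(\<integral>x. g x * II f x \<partial>L) = (\<integral>x. \<integral>y. g (fst (x, y)) * G (x, y) * f (snd (x, y)) \<partial>L \<partial>L)"
  unfolding II_def by (simp add: mult.assoc)

lemma swap:
  assumes f: "bdd f" and g: "bdd g"
  shows "(\<integral>x. g x * II f x \<partial>L) = (\<integral>x. f x * II g x \<partial>L)"
proof -
  have fm[measurable]: "f \<in> borel_measurable L" using f by (simp add: bdd_def)
  have gm[measurable]: "g \<in> borel_measurable L" using g by (simp add: bdd_def)
  have "(\<integral>x. g x * II f x \<partial>L) = (\<integral>z. g (fst z) * G z * f (snd z) \<partial>(L \<Otimes>\<^sub>M L))"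
    unfolding II_pull by (rule LL.integral_fst'[OF H_int[OF f g]])
  also have "\<dots> = (\<integral>(x, y). g (fst (y, x)) * G (y, x) * f (snd (y, x)) \<partial>(L \<Otimes>\<^sub>M L))"
    by (rule LL.integral_product_swap[symmetric]) measurable
  also have "\<dots> = (\<integral>z. f (fst z) * G z * g (snd z) \<partial>(L \<Otimes>\<^sub>M L))"
    by (rule Bochner_Integration.integral_cong) (auto simp: G_sym[of _ ] ac_simps split: prod.splits)
  also have "\<dots> = (\<integral>x. f x * II g x \<partial>L)"
    unfolding II_pull by (rule LL.integral_fst'[OF H_int[OF g f], symmetric])
  finally show ?thesis .
qed

lemma Pic:
  assumes f: "bdd f" and ubm: "ub \<in> borel_measurable L" and ubp: "\<And>x. x \<in> \<Omega> \<Longrightarrow> 0 < ub x"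
    and ubb: "bdd ub" and c: "bdd c" and eq: "AE x in L. II ub x = c x * ub x"
  shows "(\<integral>x. f x * II f x \<partial>L) \<le> (\<integral>x. f x * f x * c x \<partial>L)"
proof -
  have fm[measurable]: "f \<in> borel_measurable L" using f by (simp add: bdd_def)
  have cm[measurable]: "c \<in> borel_measurable L" using c by (simp add: bdd_def)
  note [measurable] = ubm
  define \<Phi> where "\<Phi> z = G z * (f (fst z) * f (fst z)) * ub (snd z) / ub (fst z)" for z
  define \<Psi> where "\<Psi> z = f (fst z) * G z * f (snd z)" for z
  have \<Phi>m[measurable]: "\<Phi> \<in> borel_measurable (L \<Otimes>\<^sub>M L)" unfolding \<Phi>_def by measurable
  have \<Psi>i: "integrable (L \<Otimes>\<^sub>M L) \<Psi>" unfolding \<Psi>_def by (rule H_int[OF f f])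
  have \<Phi>nn: "0 \<le> \<Phi> z" if "z \<in> space (L \<Otimes>\<^sub>M L)" for z
  proof -
    have "fst z \<in> \<Omega>" "snd z \<in> \<Omega>" using that by (auto simp: space_pair_measure)
    then have "0 < ub (fst z)" "0 \<le> ub (snd z)" using ubp by (auto simp: less_imp_le)
    moreover have "0 \<le> G z * (f (fst z) * f (fst z)) * ub (snd z)"
      using G_nn[of "fst z" "snd z"] calculation by simp
    ultimately show ?thesis unfolding \<Phi>_def by (intro divide_nonneg_pos) auto
  qed
  have inner: "\<Phi> (x, y) = (f x * f x / ub x) * (G (x, y) * ub y)" for x y
    unfolding \<Phi>_def by (simp add: field_simps)
  have inner_int: "integrable L (\<lambda>y. \<Phi> (x, y))" for x
    unfolding inner using II_int[OF ubb, of x] by simp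
  have inner_val: "(\<integral>y. \<Phi> (x, y) \<partial>L) = f x * f x / ub x * II ub x" for x
    unfolding inner II_def by simp
  have IIub_nn: "0 \<le> II ub x" if "x \<in> \<Omega>" for x
    unfolding II_def using ubp G_nn by (intro integral_nonneg_AE AE_I2) (force intro: mult_nonneg_nonneg less_imp_le)
  have c_nn: "AE x in L. 0 \<le> c x"
    using eq AE_space
  proof (eventually_elim)
    case (elim x)
    then have "0 \<le> c x * ub x" using IIub_nn[of x] by simp
    then show ?case using ubp[of x] elim by (simp add: zero_le_mult_iff)
  qed
  have ffc_int: "integrable L (\<lambda>x. f x * f x * c x)" by (intro bdd_integrable bdd_mult f c)
  have eqv: "AE x in L. f x * f x / ub x * II ub x = f x * f x * c x"
    using eq AE_space
  proof eventually_elim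
    case (elim x)
    then have "0 < ub x" using ubp by simp
    with elim show ?case by (simp add: field_simps)
  qed
  have \<Phi>i: "integrable (L \<Otimes>\<^sub>M L) \<Phi>"
  proof (rule integrableI_nonneg)
    show "AE z in L \<Otimes>\<^sub>M L. 0 \<le> \<Phi> z" using \<Phi>nn by (auto intro!: AE_I2)
    have "(\<integral>\<^sup>+z. ennreal (\<Phi> z) \<partial>(L \<Otimes>\<^sub>M L)) = (\<integral>\<^sup>+x. \<integral>\<^sup>+y. ennreal (\<Phi> (x, y)) \<partial>L \<partial>L)"
      by (rule L.nn_integral_fst[symmetric]) measurable
    also have "\<dots> = (\<integral>\<^sup>+x. ennreal (f x * f x / ub x * II ub x) \<partial>L)"
    proof (rule nn_integral_cong)
      fix x assume x: "x \<in> space L"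
      have "(\<integral>\<^sup>+y. ennreal (\<Phi> (x, y)) \<partial>L) = ennreal (\<integral>y. \<Phi> (x, y) \<partial>L)"
        using x \<Phi>nn by (intro nn_integral_eq_integral inner_int AE_I2) (auto simp: space_pair_measure)
      then show "(\<integral>\<^sup>+y. ennreal (\<Phi> (x, y)) \<partial>L) = ennreal (f x * f x / ub x * II ub x)"
        by (simp add: inner_val)
    qed
    also have "\<dots> = (\<integral>\<^sup>+x. ennreal (f x * f x * c x) \<partial>L)"
      using eqv by (intro nn_integral_cong_AE) (auto elim!: eventually_mono)
    also have "\<dots> = ennreal (\<integral>x. f x * f x * c x \<partial>L)"
      using c_nn ffc_int by (intro nn_integral_eq_integral) (auto elim!: eventually_mono)
    also have "\<dots> < \<infinity>" by simp
    finally show "(\<integral>\<^sup>+z. ennreal (\<Phi> z) \<partial>(L \<Otimes>\<^sub>M L)) < \<infinity>" .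
  qed measurable
  have \<Phi>val: "(\<integral>z. \<Phi> z \<partial>(L \<Otimes>\<^sub>M L)) = (\<integral>x. f x * f x * c x \<partial>L)"
  proof -
    have "(\<integral>z. \<Phi> z \<partial>(L \<Otimes>\<^sub>M L)) = (\<integral>x. \<integral>y. \<Phi> (x, y) \<partial>L \<partial>L)"
      by (rule LL.integral_fst'[OF \<Phi>i, symmetric])
    also have "\<dots> = (\<integral>x. f x * f x / ub x * II ub x \<partial>L)" by (simp add: inner_val)
    also have "\<dots> = (\<integral>x. f x * f x * c x \<partial>L)"
      using eqv II_meas[OF ubm] by (intro integral_cong_AE) auto
    finally show ?thesis .
  qed
  have \<Phi>si: "integrable (L \<Otimes>\<^sub>M L) (\<lambda>(x, y). \<Phi> (y, x))" by (rule LL.integrable_product_swap[OF \<Phi>i])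
  have \<Phi>sval: "(\<integral>(x, y). \<Phi> (y, x) \<partial>(L \<Otimes>\<^sub>M L)) = (\<integral>z. \<Phi> z \<partial>(L \<Otimes>\<^sub>M L))"
    by (rule LL.integral_product_swap) measurable
  have "(\<integral>z. \<Psi> z \<partial>(L \<Otimes>\<^sub>M L)) \<le> (\<integral>z. \<Phi> z / 2 + (case z of (x, y) \<Rightarrow> \<Phi> (y, x)) / 2 \<partial>(L \<Otimes>\<^sub>M L))"
  proof (rule integral_mono)
    show "integrable (L \<Otimes>\<^sub>M L) \<Psi>" by (rule \<Psi>i)
    show "integrable (L \<Otimes>\<^sub>M L) (\<lambda>z. \<Phi> z / 2 + (case z of (x, y) \<Rightarrow> \<Phi> (y, x)) / 2)"
      using \<Phi>i \<Phi>si by auto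
    fix z assume z: "z \<in> space (L \<Otimes>\<^sub>M L)"
    obtain x y where xy: "z = (x, y)" by (cases z)
    have "x \<in> \<Omega>" "y \<in> \<Omega>" using z xy by (auto simp: space_pair_measure)
    then show "\<Psi> z \<le> \<Phi> z / 2 + (case z of (x, y) \<Rightarrow> \<Phi> (y, x)) / 2"
      unfolding xy \<Psi>_def \<Phi>_def using amgm_aux[OF G_nn[of x y] ubp[of x] ubp[of y], of "f x" "f y"]
      by (simp add: G_sym[of y x])
  qed
  also have "\<dots> = (\<integral>z. \<Phi> z \<partial>(L \<Otimes>\<^sub>M L)) / 2 + (\<integral>(x, y). \<Phi> (y, x) \<partial>(L \<Otimes>\<^sub>M L)) / 2"
    using \<Phi>i \<Phi>si by simp
  also have "\<dots> = (\<integral>x. f x * f x * c x \<partial>L)" unfolding \<Phi>sval \<Phi>val by simp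
  finally have le: "(\<integral>z. \<Psi> z \<partial>(L \<Otimes>\<^sub>M L)) \<le> (\<integral>x. f x * f x * c x \<partial>L)" .
  have "(\<integral>x. f x * II f x \<partial>L) = (\<integral>z. \<Psi> z \<partial>(L \<Otimes>\<^sub>M L))"
    unfolding II_pull \<Psi>_def by (rule LL.integral_fst'[OF H_int[OF f f]])
  with le show ?thesis by simp
qed

end

lemma cont_from0:
  fixes F F' :: "real \<Rightarrow> real"
  assumes c0: "(F \<longlongrightarrow> F 0) (at_right 0)"
    and d: "\<And>s. 0 < s \<Longrightarrow> s \<le> t \<Longrightarrow> (F has_real_derivative F' s) (at s)"
  shows "continuous_on {0..t} F"
proof (cases "0 < t")
  case False
  then show ?thesis by (cases "t = 0") (auto simp: continuous_on_sing)
next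
  case tp: True
  show ?thesis
  proof (rule continuous_on_eq_continuous_within[THEN iffD2], intro ballI)
    fix x assume x: "x \<in> {0..t}"
    show "continuous (at x within {0..t}) F"
    proof (cases "x = 0")
      case True
      have "(F \<longlongrightarrow> F 0) (at 0 within {0..t})"
        using c0 at_within_Icc_at_right[OF tp] by simp
      then show ?thesis using True by (simp add: continuous_within)
    next
      case False
      then have "0 < x" "x \<le> t" using x by auto
      from d[OF this] have "isCont F x" by (rule DERIV_isCont)
      then show ?thesis by (rule continuous_at_imp_continuous_at_within)
    qed
  qed
qed

lemma incr_from0':
  fixes F F' :: "real \<Rightarrow> real"
  assumes t: "0 \<le> t" and c0: "(F \<longlongrightarrow> F 0) (at_right 0)"
    and d: "\<And>s. 0 < s \<Longrightarrow> s \<le> t \<Longrightarrow> (F has_real_derivative F' s) (at s)"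
    and nn: "\<And>s. 0 < s \<Longrightarrow> s < t \<Longrightarrow> 0 \<le> F' s"
  shows "F 0 \<le> F t"
proof -
  have con: "continuous_on {0..t} F" by (rule cont_from0[OF c0 d])
  show ?thesis
    using DERIV_nonneg_imp_increasing_open[OF t _ con] d nn by fastforce
qed

locale mainctx = kernG \<Omega> m G N Hb for \<Omega> :: "'n::euclidean_space set" and m G N Hb +
  fixes u u' :: "real \<Rightarrow> 'n \<Rightarrow> real" and a k ub :: "'n \<Rightarrow> real" and A amin amax c0 C0 :: real
  assumes uX: "\<And>s. 0 \<le> s \<Longrightarrow> bdd (u s)" and u'X: "\<And>s. 0 < s \<Longrightarrow> bdd (u' s)"
    and dq: "\<And>t. 0 < t \<Longrightarrow> ((\<lambda>h. X_norm \<Omega> (\<lambda>x. (u (t + h) x - u t x) / h - u' t x)) \<longlongrightarrow> 0) (at 0)"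
    and c0u: "((\<lambda>s. X_norm \<Omega> (\<lambda>x. u s x - u 0 x)) \<longlongrightarrow> 0) (at_right 0)"
    and unn: "\<And>s. 0 \<le> s \<Longrightarrow> AE x in lebesgue_on \<Omega>. 0 \<le> u s x"
    and u0pos: "\<not> (AE x in lebesgue_on \<Omega>. u 0 x = 0)"
    and ueq: "\<And>t. 0 < t \<Longrightarrow> AE x in lebesgue_on \<Omega>. u' t x = II (u t) x - u t x * hh x
          + (a x - (\<integral>y. k y * u t y \<partial>lebesgue_on \<Omega>)) * u t x"
    and a_bdd: "bdd a" and a_lo: "\<And>x. x \<in> \<Omega> \<Longrightarrow> amin \<le> a x" and a_hi: "\<And>x. x \<in> \<Omega> \<Longrightarrow> a x \<le> amax"
    and amin_pos: "0 < amin"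
    and k_bdd: "bdd k" and k_lo: "\<And>x. x \<in> \<Omega> \<Longrightarrow> c0 \<le> k x" and k_hi: "\<And>x. x \<in> \<Omega> \<Longrightarrow> k x \<le> C0"
    and c0_pos: "0 < c0"
    and ub_bdd: "bdd ub" and ub_pos: "\<And>x. x \<in> \<Omega> \<Longrightarrow> 0 < ub x"
    and A_def: "A = (\<integral>x. k x * ub x \<partial>lebesgue_on \<Omega>)"
    and ub_eq: "AE x in lebesgue_on \<Omega>. II ub x = (A + hh x - a x) * ub x"
begin

definition "Ms s = (\<integral>x. u s x \<partial>L)"
definition "Ps s = (\<integral>x. ub x * u s x \<partial>L)"
definition "Qs s = (\<integral>x. u s x * u s x \<partial>L)"
definition "Ks s = (\<integral>x. k x * u s x \<partial>L)"
definition "Ls s = (\<integral>x. a x * u s x \<partial>L)"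

lemma uXt: "0 < t \<Longrightarrow> bdd (u t)" by (intro uX) auto

lemma Ms_deriv: "0 < t \<Longrightarrow> (Ms has_real_derivative (\<integral>x. u' t x \<partial>L)) (at t)"
  using deriv_lin[of "\<lambda>x. 1" u u' t] bdd_const uX u'X dq unfolding Ms_def by simp

lemma Ps_deriv: "0 < t \<Longrightarrow> (Ps has_real_derivative (\<integral>x. ub x * u' t x \<partial>L)) (at t)"
  using deriv_lin[of ub u u' t] ub_bdd uX u'X dq unfolding Ps_def by simp

lemma Qs_deriv: "0 < t \<Longrightarrow> (Qs has_real_derivative 2 * (\<integral>x. u t x * u' t x \<partial>L)) (at t)"
  using deriv_sq[of u u' t] uX u'X dq unfolding Qs_def by simp

lemma Ms_cont: "(Ms \<longlongrightarrow> Ms 0) (at_right 0)"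
  using cont_lin[of "\<lambda>x. 1" u] bdd_const uX c0u unfolding Ms_def by simp

lemma Ps_cont: "(Ps \<longlongrightarrow> Ps 0) (at_right 0)"
  using cont_lin[of ub u] ub_bdd uX c0u unfolding Ps_def by simp

lemma Qs_cont: "(Qs \<longlongrightarrow> Qs 0) (at_right 0)"
  using cont_sq[of u] uX c0u unfolding Qs_def by simp

lemma ueq_int:
  assumes t: "0 < t" and g: "bdd g"
  shows "(\<integral>x. g x * u' t x \<partial>L) = (\<integral>x. g x * II (u t) x \<partial>L) - (\<integral>x. g x * u t x * hh x \<partial>L)
     + (\<integral>x. g x * a x * u t x \<partial>L) - Ks t * (\<integral>x. g x * u t x \<partial>L)"
proof -
  have ut: "bdd (u t)" using uXt[OF t] .
  have b1: "bdd (\<lambda>x. g x * II (u t) x)" by (intro bdd_mult g bdd_II ut)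
  have b2: "bdd (\<lambda>x. g x * u t x * hh x)" by (intro bdd_mult g bdd_hh ut)
  have b3: "bdd (\<lambda>x. g x * a x * u t x)" by (intro bdd_mult g a_bdd ut)
  have b4: "bdd (\<lambda>x. g x * u t x)" by (intro bdd_mult g ut)
  have "(\<integral>x. g x * u' t x \<partial>L) = (\<integral>x. g x * II (u t) x - g x * u t x * hh x + g x * a x * u t x - Ks t * (g x * u t x) \<partial>L)"
  proof (rule integral_cong_AE)
    show "(\<lambda>x. g x * u' t x) \<in> borel_measurable L" using bdd_mult[OF g u'X[OF t]] by (simp add: bdd_def)
    show "(\<lambda>x. g x * II (u t) x - g x * u t x * hh x + g x * a x * u t x - Ks t * (g x * u t x)) \<in> borel_measurable L"
      using bdd_diff[OF bdd_add[OF bdd_diff[OF b1 b2] b3] bdd_cmult[OF b4]] by (simp add: bdd_def)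
    show "AE x in L. g x * u' t x = g x * II (u t) x - g x * u t x * hh x + g x * a x * u t x - Ks t * (g x * u t x)"
      using ueq[OF t]
    proof (rule eventually_mono)
      fix x assume e: "u' t x = II (u t) x - u t x * hh x + (a x - (\<integral>y. k y * u t y \<partial>L)) * u t x"
      show "g x * u' t x = g x * II (u t) x - g x * u t x * hh x + g x * a x * u t x - Ks t * (g x * u t x)"
        unfolding e Ks_def by (simp add: algebra_simps)
    qed
  qed
  also have "\<dots> = (\<integral>x. g x * II (u t) x \<partial>L) - (\<integral>x. g x * u t x * hh x \<partial>L)
     + (\<integral>x. g x * a x * u t x \<partial>L) - Ks t * (\<integral>x. g x * u t x \<partial>L)"
    using bdd_integrable[OF b1] bdd_integrable[OF b2] bdd_integrable[OF b3] bdd_integrable[OF b4]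
    by (simp add: integral_add integral_diff)
  finally show ?thesis .
qed

lemma II_one: "II (\<lambda>x. 1) = hh" unfolding II_def hh_def by (simp add: fun_eq_iff)

lemma Ms_der_val: assumes t: "0 < t" shows "(\<integral>x. u' t x \<partial>L) = Ls t - Ks t * Ms t"
proof -
  have ut: "bdd (u t)" using uXt[OF t] .
  have "(\<integral>x. u' t x \<partial>L) = (\<integral>x. 1 * u' t x \<partial>L)" by simp
  also have "\<dots> = (\<integral>x. 1 * II (u t) x \<partial>L) - (\<integral>x. 1 * u t x * hh x \<partial>L)
     + (\<integral>x. 1 * a x * u t x \<partial>L) - Ks t * (\<integral>x. 1 * u t x \<partial>L)"
    by (rule ueq_int[OF t bdd_const])
  also have "(\<integral>x. 1 * II (u t) x \<partial>L) = (\<integral>x. u t x * II (\<lambda>x. 1) x \<partial>L)"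
    by (rule swap[OF ut bdd_const])
  finally show ?thesis unfolding II_one Ls_def Ms_def by (simp add: ac_simps)
qed

lemma Ps_der_val: assumes t: "0 < t" shows "(\<integral>x. ub x * u' t x \<partial>L) = (A - Ks t) * Ps t"
proof -
  have ut: "bdd (u t)" using uXt[OF t] .
  have "(\<integral>x. ub x * u' t x \<partial>L) = (\<integral>x. ub x * II (u t) x \<partial>L) - (\<integral>x. ub x * u t x * hh x \<partial>L)
     + (\<integral>x. ub x * a x * u t x \<partial>L) - Ks t * (\<integral>x. ub x * u t x \<partial>L)"
    by (rule ueq_int[OF t ub_bdd])
  also have "(\<integral>x. ub x * II (u t) x \<partial>L) = (\<integral>x. u t x * II ub x \<partial>L)"
    by (rule swap[OF ut ub_bdd])
  also have "\<dots> = (\<integral>x. A * (ub x * u t x) + ub x * u t x * hh x - ub x * a x * u t x \<partial>L)"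
  proof (rule integral_cong_AE)
    show "(\<lambda>x. u t x * II ub x) \<in> borel_measurable L" using bdd_mult[OF ut bdd_II[OF ub_bdd]] by (simp add: bdd_def)
    show "(\<lambda>x. A * (ub x * u t x) + ub x * u t x * hh x - ub x * a x * u t x) \<in> borel_measurable L"
      using ut ub_bdd a_bdd bdd_hh by (auto simp: bdd_def)
    show "AE x in L. u t x * II ub x = A * (ub x * u t x) + ub x * u t x * hh x - ub x * a x * u t x"
      using ub_eq
    proof (rule eventually_mono)
      fix x assume e: "II ub x = (A + hh x - a x) * ub x"
      show "u t x * II ub x = A * (ub x * u t x) + ub x * u t x * hh x - ub x * a x * u t x"
        unfolding e by (simp add: algebra_simps)
    qed
  qed
  also have "\<dots> = A * (\<integral>x. ub x * u t x \<partial>L) + (\<integral>x. ub x * u t x * hh x \<partial>L) - (\<integral>x. ub x * a x * u t x \<partial>L)"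
    using bdd_integrable[OF bdd_mult[OF ub_bdd ut]] bdd_integrable[OF bdd_mult[OF bdd_mult[OF ub_bdd ut] bdd_hh]]
      bdd_integrable[OF bdd_mult[OF bdd_mult[OF ub_bdd a_bdd] ut]]
    by (simp add: integral_add integral_diff)
  finally show ?thesis unfolding Ps_def by (simp add: algebra_simps)
qed

lemma Qs_der_le: assumes t: "0 < t" shows "(\<integral>x. u t x * u' t x \<partial>L) \<le> (A - Ks t) * Qs t"
proof -
  have ut: "bdd (u t)" using uXt[OF t] .
  have c: "bdd (\<lambda>x. A + hh x - a x)" by (intro bdd_diff bdd_add bdd_const bdd_hh a_bdd)
  have "(\<integral>x. u t x * u' t x \<partial>L) = (\<integral>x. u t x * II (u t) x \<partial>L) - (\<integral>x. u t x * u t x * hh x \<partial>L)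
     + (\<integral>x. u t x * a x * u t x \<partial>L) - Ks t * (\<integral>x. u t x * u t x \<partial>L)"
    by (rule ueq_int[OF t ut])
  also have "(\<integral>x. u t x * II (u t) x \<partial>L) \<le> (\<integral>x. u t x * u t x * (A + hh x - a x) \<partial>L)"
    by (rule Pic[OF ut _ ub_pos ub_bdd c ub_eq]) (use ub_bdd in \<open>simp add: bdd_def\<close>)
  also have "(\<integral>x. u t x * u t x * (A + hh x - a x) \<partial>L) =
      A * (\<integral>x. u t x * u t x \<partial>L) + (\<integral>x. u t x * u t x * hh x \<partial>L) - (\<integral>x. u t x * a x * u t x \<partial>L)"
  proof -
    have "(\<integral>x. u t x * u t x * (A + hh x - a x) \<partial>L) =
      (\<integral>x. A * (u t x * u t x) + u t x * u t x * hh x - u t x * a x * u t x \<partial>L)"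
      by (simp add: algebra_simps)
    also have "\<dots> = A * (\<integral>x. u t x * u t x \<partial>L) + (\<integral>x. u t x * u t x * hh x \<partial>L) - (\<integral>x. u t x * a x * u t x \<partial>L)"
      using bdd_integrable[OF bdd_mult[OF ut ut]] bdd_integrable[OF bdd_mult[OF bdd_mult[OF ut ut] bdd_hh]]
        bdd_integrable[OF bdd_mult[OF bdd_mult[OF ut a_bdd] ut]]
      by (simp add: integral_add integral_diff)
    finally show ?thesis .
  qed
  finally show ?thesis unfolding Qs_def by (simp add: algebra_simps)
qed

end

lemma deriv_exp_mult:
  fixes F :: "real \<Rightarrow> real"
  assumes "(F has_real_derivative D) (at s)"
  shows "((\<lambda>s. exp (c * s) * F s) has_real_derivative exp (c * s) * (c * F s + D)) (at s)"
proof -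
  have e: "((\<lambda>s. exp (c * s)) has_real_derivative exp (c * s) * c) (at s)"
    using DERIV_chain2[OF DERIV_exp DERIV_cmult[OF DERIV_ident, of c]] by simp
  show ?thesis using DERIV_mult[OF e assms] by (simp add: algebra_simps)
qed

lemma deriv_inv_sub:
  fixes F :: "real \<Rightarrow> real"
  assumes "(F has_real_derivative D) (at s)" "F s \<noteq> 0"
  shows "((\<lambda>s. inverse (F s) - b) has_real_derivative - (D / (F s * F s))) (at s)"
  using DERIV_diff[OF DERIV_inverse_fun[OF assms] DERIV_const[of b]] by (simp add: divide_inverse power2_eq_square)

context mainctx
begin

lemma C0_nn: "c0 \<le> C0"
proof -
  obtain x where "x \<in> \<Omega>" using Om_ne by auto
  then show ?thesis using k_lo k_hi by force
qed

lemma ints: "0 \<le> s \<Longrightarrow> integrable L (\<lambda>x. g x * u s x)" if "bdd g" for g s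
  using bi[OF that uX] by simp

lemma Ms_nn: "0 \<le> s \<Longrightarrow> 0 \<le> Ms s"
  unfolding Ms_def using unn by (intro integral_nonneg_AE) auto

lemma uint: "0 \<le> s \<Longrightarrow> integrable L (u s)" using uX bdd_integrable by auto

lemma aeu: "0 \<le> s \<Longrightarrow> AE x in L. 0 \<le> u s x \<and> x \<in> \<Omega>"
  using eventually_conj[OF unn AE_space] by simp

lemma Ks_bounds: assumes s: "0 \<le> s" shows "c0 * Ms s \<le> Ks s" "Ks s \<le> C0 * Ms s"
proof -
  have ik: "integrable L (\<lambda>x. k x * u s x)" using ints[OF k_bdd s] .
  have ae1: "AE x in L. c0 * u s x \<le> k x * u s x"
    using aeu[OF s] by (rule eventually_mono) (auto intro!: mult_right_mono k_lo)
  have ae2: "AE x in L. k x * u s x \<le> C0 * u s x"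
    using aeu[OF s] by (rule eventually_mono) (auto intro!: mult_right_mono k_hi)
  have "c0 * Ms s = (\<integral>x. c0 * u s x \<partial>L)" unfolding Ms_def by simp
  also have "\<dots> \<le> Ks s" unfolding Ks_def using uint[OF s] ik ae1 by (intro integral_mono_AE) auto
  finally show "c0 * Ms s \<le> Ks s" .
  have "Ks s \<le> (\<integral>x. C0 * u s x \<partial>L)" unfolding Ks_def using uint[OF s] ik ae2 by (intro integral_mono_AE) auto
  also have "\<dots> = C0 * Ms s" unfolding Ms_def by simp
  finally show "Ks s \<le> C0 * Ms s" .
qed

lemma Ls_bounds: assumes s: "0 \<le> s" shows "amin * Ms s \<le> Ls s" "Ls s \<le> amax * Ms s"
proof -
  have ik: "integrable L (\<lambda>x. a x * u s x)" using ints[OF a_bdd s] .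
  have ae1: "AE x in L. amin * u s x \<le> a x * u s x"
    using aeu[OF s] by (rule eventually_mono) (auto intro!: mult_right_mono a_lo)
  have ae2: "AE x in L. a x * u s x \<le> amax * u s x"
    using aeu[OF s] by (rule eventually_mono) (auto intro!: mult_right_mono a_hi)
  have "amin * Ms s = (\<integral>x. amin * u s x \<partial>L)" unfolding Ms_def by simp
  also have "\<dots> \<le> Ls s" unfolding Ls_def using uint[OF s] ik ae1 by (intro integral_mono_AE) auto
  finally show "amin * Ms s \<le> Ls s" .
  have "Ls s \<le> (\<integral>x. amax * u s x \<partial>L)" unfolding Ls_def using uint[OF s] ik ae2 by (intro integral_mono_AE) auto
  also have "\<dots> = amax * Ms s" unfolding Ms_def by simp
  finally show "Ls s \<le> amax * Ms s" .
qed

lemma Ps_nn: assumes s: "0 \<le> s" shows "0 \<le> Ps s"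
  unfolding Ps_def
proof (intro integral_nonneg_AE)
  show "AE x in L. 0 \<le> ub x * u s x"
    using aeu[OF s] proof (rule eventually_mono)
    fix x assume "0 \<le> u s x \<and> x \<in> \<Omega>"
    then show "0 \<le> ub x * u s x" using ub_pos[of x] by simp
  qed
qed

lemma A_nn: "0 \<le> A"
  unfolding A_def
proof (intro integral_nonneg_AE)
  show "AE x in L. 0 \<le> k x * ub x"
    using AE_space proof (rule eventually_mono)
    fix x assume "x \<in> space L"
    then have "c0 \<le> k x" "0 < ub x" using k_lo ub_pos by auto
    then show "0 \<le> k x * ub x" using c0_pos by simp
  qed
qed

lemma Ms0_pos: "0 < Ms 0"
proof -
  have "Ms 0 \<noteq> 0"
  proof
    assume "Ms 0 = 0"
    then have "AE x in L. u 0 x = 0" unfolding Ms_def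
      using integral_nonneg_eq_0_iff_AE[OF uint[OF order_refl] unn[OF order_refl]] by auto
    with u0pos show False by simp
  qed
  then show ?thesis using Ms_nn[of 0] by simp
qed

lemma Ps0_pos: "0 < Ps 0"
proof -
  have i: "integrable L (\<lambda>x. ub x * u 0 x)" using ints[OF ub_bdd] by simp
  have nn: "AE x in L. 0 \<le> ub x * u 0 x"
    using aeu[OF order_refl] proof (rule eventually_mono)
    fix x assume "0 \<le> u 0 x \<and> x \<in> \<Omega>"
    then show "0 \<le> ub x * u 0 x" using ub_pos[of x] by simp
  qed
  have "Ps 0 \<noteq> 0"
  proof
    assume "Ps 0 = 0"
    then have "AE x in L. ub x * u 0 x = 0" unfolding Ps_def
      using integral_nonneg_eq_0_iff_AE[OF i nn] by auto
    then have "AE x in L. u 0 x = 0" using AE_space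
    proof eventually_elim
      case (elim x)
      then show ?case using ub_pos[of x] by simp
    qed
    with u0pos show False by simp
  qed
  then show ?thesis using Ps_nn[of 0] by simp
qed

lemma Ms_der: "0 < s \<Longrightarrow> (Ms has_real_derivative Ls s - Ks s * Ms s) (at s)"
  using Ms_deriv Ms_der_val by simp

lemma Ps_der: "0 < s \<Longrightarrow> (Ps has_real_derivative (A - Ks s) * Ps s) (at s)"
  using Ps_deriv Ps_der_val by simp

lemma Ms_pos: assumes t: "0 \<le> t" shows "0 < Ms t"
proof -
  have con: "continuous_on {0..t} Ms"
    by (rule cont_from0[OF Ms_cont]) (use Ms_der in auto)
  obtain x where x: "x \<in> {0..t}" "\<forall>y\<in>{0..t}. Ms y \<le> Ms x"
    using continuous_attains_sup[OF compact_Icc _ con] t by auto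
  define MT where "MT = Ms x"
  have MT: "\<And>s. 0 \<le> s \<Longrightarrow> s \<le> t \<Longrightarrow> Ms s \<le> MT" using x unfolding MT_def by auto
  define lam where "lam = C0 * MT"
  have "exp (lam * 0) * Ms 0 \<le> exp (lam * t) * Ms t"
  proof (rule incr_from0'[where F = "\<lambda>s. exp (lam * s) * Ms s"])
    show "0 \<le> t" by (rule t)
    show "((\<lambda>s. exp (lam * s) * Ms s) \<longlongrightarrow> exp (lam * 0) * Ms 0) (at_right 0)"
      by (intro tendsto_intros Ms_cont)
    fix s :: real assume s: "0 < s"
    show "((\<lambda>s. exp (lam * s) * Ms s) has_real_derivative
        exp (lam * s) * (lam * Ms s + (Ls s - Ks s * Ms s))) (at s)"
      by (rule deriv_exp_mult[OF Ms_der[OF s]])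
    assume st: "s < t"
    have b: "Ks s \<le> C0 * Ms s" "C0 * Ms s \<le> C0 * MT" "0 \<le> Ms s"
      using Ks_bounds[of s] MT[of s] s st Ms_nn[of s] C0_nn c0_pos
      by (auto intro!: mult_left_mono)
    moreover have "0 \<le> amin * Ms s" using amin_pos b(3) by simp
    ultimately have "0 \<le> Ls s" using Ls_bounds[of s] s by linarith
    have "Ks s * Ms s \<le> lam * Ms s" unfolding lam_def using b by (intro mult_right_mono) auto
    then show "0 \<le> exp (lam * s) * (lam * Ms s + (Ls s - Ks s * Ms s))"
      using \<open>0 \<le> Ls s\<close> by (intro mult_nonneg_nonneg) auto
  qed
  then have "0 < exp (lam * t) * Ms t" using Ms0_pos by simp
  then show ?thesis by (simp add: zero_less_mult_iff)
qed

end

lemma deriv_inv_sub2: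
  fixes F :: "real \<Rightarrow> real"
  assumes "(F has_real_derivative D) (at s)" "F s \<noteq> 0"
  shows "((\<lambda>s. b - inverse (F s)) has_real_derivative D / (F s * F s)) (at s)"
  using DERIV_diff[OF DERIV_const[of b] DERIV_inverse_fun[OF assms]] by (simp add: divide_inverse power2_eq_square)

context mainctx
begin

lemma amax_pos: "0 < amax"
proof -
  obtain x where "x \<in> \<Omega>" using Om_ne by auto
  then show ?thesis using a_lo a_hi amin_pos by force
qed

lemma Ms_upper: obtains Mb where "0 < Mb" "\<And>t. 0 \<le> t \<Longrightarrow> Ms t \<le> Mb"
proof -
  define \<rho> where "\<rho> = min (inverse (Ms 0)) (c0 / amax)"
  have rp: "0 < \<rho>" unfolding \<rho>_def using Ms0_pos c0_pos amax_pos by simp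
  have main: "\<rho> \<le> inverse (Ms t)" if t: "0 \<le> t" for t
  proof -
    define b where "b = c0 / amax"
    have "exp (amax * 0) * (inverse (Ms 0) - b) \<le> exp (amax * t) * (inverse (Ms t) - b)"
    proof (rule incr_from0'[where F = "\<lambda>s. exp (amax * s) * (inverse (Ms s) - b)"])
      show "0 \<le> t" by (rule t)
      show "((\<lambda>s. exp (amax * s) * (inverse (Ms s) - b)) \<longlongrightarrow> exp (amax * 0) * (inverse (Ms 0) - b)) (at_right 0)"
        using Ms0_pos by (intro tendsto_intros Ms_cont) auto
      fix s :: real assume s: "0 < s"
      show "((\<lambda>s. exp (amax * s) * (inverse (Ms s) - b)) has_real_derivative
          exp (amax * s) * (amax * (inverse (Ms s) - b) + - ((Ls s - Ks s * Ms s) / (Ms s * Ms s)))) (at s)"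
        by (rule deriv_exp_mult[OF deriv_inv_sub[OF Ms_der[OF s]]]) (use Ms_pos[of s] s in auto)
      have Mp: "0 < Ms s" using Ms_pos[of s] s by auto
      have "c0 * Ms s * Ms s \<le> Ks s * Ms s"
        using mult_right_mono[OF Ks_bounds(1) less_imp_le[OF Mp]] s by auto
      then have key: "Ls s - Ks s * Ms s \<le> amax * Ms s - c0 * Ms s * Ms s"
        using Ls_bounds(2)[of s] s by auto
      have q: "(Ls s - Ks s * Ms s) / (Ms s * Ms s) \<le> (amax * Ms s - c0 * Ms s * Ms s) / (Ms s * Ms s)"
        by (rule divide_right_mono[OF key]) simp
      have r: "(amax * Ms s - c0 * Ms s * Ms s) / (Ms s * Ms s) = amax * (inverse (Ms s) - b)"
        unfolding b_def using Mp amax_pos by (simp add: field_simps)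
      show "0 \<le> exp (amax * s) * (amax * (inverse (Ms s) - b) + - ((Ls s - Ks s * Ms s) / (Ms s * Ms s)))"
        using q r by (intro mult_nonneg_nonneg) auto
    qed
    then have ineq: "inverse (Ms 0) - b \<le> exp (amax * t) * (inverse (Ms t) - b)" by simp
    show ?thesis
    proof (cases "0 \<le> inverse (Ms t) - b")
      case True
      then show ?thesis unfolding \<rho>_def b_def by simp
    next
      case False
      have "1 \<le> exp (amax * t)" using amax_pos t by simp
      then have "exp (amax * t) * (inverse (Ms t) - b) \<le> 1 * (inverse (Ms t) - b)"
        using False by (intro mult_right_mono_neg) auto
      then show ?thesis using ineq unfolding \<rho>_def by simp
    qed
  qed
  show ?thesis
  proof
    show "0 < inverse \<rho>" using rp by simp
    fix t :: real assume t: "0 \<le> t"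
    have "inverse (inverse (Ms t)) \<le> inverse \<rho>" by (rule le_imp_inverse_le[OF main[OF t] rp])
    then show "Ms t \<le> inverse \<rho>" by simp
  qed
qed

lemma Ms_lower: obtains Ml where "0 < Ml" "\<And>t. 0 \<le> t \<Longrightarrow> Ml \<le> Ms t"
proof -
  define \<sigma> where "\<sigma> = max (inverse (Ms 0)) (C0 / amin)"
  have sp: "0 < \<sigma>" using Ms0_pos unfolding \<sigma>_def by (simp add: less_max_iff_disj)
  have main: "inverse (Ms t) \<le> \<sigma>" if t: "0 \<le> t" for t
  proof -
    define b where "b = C0 / amin"
    have "exp (amin * 0) * (b - inverse (Ms 0)) \<le> exp (amin * t) * (b - inverse (Ms t))"
    proof (rule incr_from0'[where F = "\<lambda>s. exp (amin * s) * (b - inverse (Ms s))"])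
      show "0 \<le> t" by (rule t)
      show "((\<lambda>s. exp (amin * s) * (b - inverse (Ms s))) \<longlongrightarrow> exp (amin * 0) * (b - inverse (Ms 0))) (at_right 0)"
        using Ms0_pos by (intro tendsto_intros Ms_cont) auto
      fix s :: real assume s: "0 < s"
      show "((\<lambda>s. exp (amin * s) * (b - inverse (Ms s))) has_real_derivative
          exp (amin * s) * (amin * (b - inverse (Ms s)) + (Ls s - Ks s * Ms s) / (Ms s * Ms s))) (at s)"
        by (rule deriv_exp_mult[OF deriv_inv_sub2[OF Ms_der[OF s]]]) (use Ms_pos[of s] s in auto)
      have Mp: "0 < Ms s" using Ms_pos[of s] s by auto
      have "Ks s * Ms s \<le> C0 * Ms s * Ms s"
        using mult_right_mono[OF Ks_bounds(2) less_imp_le[OF Mp]] s by auto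
      then have key: "amin * Ms s - C0 * Ms s * Ms s \<le> Ls s - Ks s * Ms s"
        using Ls_bounds(1)[of s] s by auto
      have q: "(amin * Ms s - C0 * Ms s * Ms s) / (Ms s * Ms s) \<le> (Ls s - Ks s * Ms s) / (Ms s * Ms s)"
        by (rule divide_right_mono[OF key]) simp
      have r: "(amin * Ms s - C0 * Ms s * Ms s) / (Ms s * Ms s) = - (amin * (b - inverse (Ms s)))"
        unfolding b_def using Mp amin_pos by (simp add: field_simps)
      show "0 \<le> exp (amin * s) * (amin * (b - inverse (Ms s)) + (Ls s - Ks s * Ms s) / (Ms s * Ms s))"
        using q r by (intro mult_nonneg_nonneg) auto
    qed
    then have ineq: "b - inverse (Ms 0) \<le> exp (amin * t) * (b - inverse (Ms t))" by simp
    show ?thesis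
    proof (cases "0 \<le> b - inverse (Ms t)")
      case True
      then show ?thesis unfolding \<sigma>_def b_def by simp
    next
      case False
      have "1 \<le> exp (amin * t)" using amin_pos t by simp
      then have "exp (amin * t) * (b - inverse (Ms t)) \<le> 1 * (b - inverse (Ms t))"
        using False by (intro mult_right_mono_neg) auto
      then show ?thesis using ineq unfolding \<sigma>_def by simp
    qed
  qed
  show ?thesis
  proof
    show "0 < inverse \<sigma>" using sp by simp
    fix t :: real assume t: "0 \<le> t"
    have "inverse \<sigma> \<le> inverse (inverse (Ms t))"
      by (rule le_imp_inverse_le[OF main[OF t]]) (use Ms_pos[OF t] in simp)
    then show "inverse \<sigma> \<le> Ms t" by simp
  qed
qed

end

context mainctx
begin

lemma Ps_pos: assumes t: "0 \<le> t" shows "0 < Ps t"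
proof -
  obtain Mb where Mb: "0 < Mb" "\<And>t. 0 \<le> t \<Longrightarrow> Ms t \<le> Mb" using Ms_upper by blast
  define lam where "lam = C0 * Mb"
  have "exp (lam * 0) * Ps 0 \<le> exp (lam * t) * Ps t"
  proof (rule incr_from0'[where F = "\<lambda>s. exp (lam * s) * Ps s"])
    show "0 \<le> t" by (rule t)
    show "((\<lambda>s. exp (lam * s) * Ps s) \<longlongrightarrow> exp (lam * 0) * Ps 0) (at_right 0)"
      by (intro tendsto_intros Ps_cont)
    fix s :: real assume s: "0 < s"
    show "((\<lambda>s. exp (lam * s) * Ps s) has_real_derivative
        exp (lam * s) * (lam * Ps s + (A - Ks s) * Ps s)) (at s)"
      by (rule deriv_exp_mult[OF Ps_der[OF s]])
    have "Ks s \<le> C0 * Ms s" "C0 * Ms s \<le> C0 * Mb"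
      using Ks_bounds[of s] Mb(2)[of s] s C0_nn c0_pos by (auto intro!: mult_left_mono)
    then have "0 \<le> lam + (A - Ks s)" unfolding lam_def using A_nn by linarith
    then have "0 \<le> (lam + (A - Ks s)) * Ps s" using Ps_nn[of s] s by simp
    moreover have e: "lam * Ps s + (A - Ks s) * Ps s = (lam + (A - Ks s)) * Ps s" by (simp add: algebra_simps)
    ultimately show "0 \<le> exp (lam * s) * (lam * Ps s + (A - Ks s) * Ps s)"
      by simp
  qed
  then have "0 < exp (lam * t) * Ps t" using Ps0_pos by simp
  then show ?thesis by (simp add: zero_less_mult_iff)
qed

lemma R_decr: assumes t: "0 \<le> t" shows "Qs t / (Ps t * Ps t) \<le> Qs 0 / (Ps 0 * Ps 0)"
proof -
  have "- (Qs 0 / (Ps 0 * Ps 0)) \<le> - (Qs t / (Ps t * Ps t))"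
  proof (rule incr_from0'[where F = "\<lambda>s. - (Qs s / (Ps s * Ps s))"])
    show "0 \<le> t" by (rule t)
    show "((\<lambda>s. - (Qs s / (Ps s * Ps s))) \<longlongrightarrow> - (Qs 0 / (Ps 0 * Ps 0))) (at_right 0)"
      using Ps0_pos by (intro tendsto_intros Ps_cont Qs_cont) auto
    fix s :: real assume s: "0 < s"
    have Pp: "0 < Ps s" using Ps_pos[of s] s by auto
    show "((\<lambda>s. - (Qs s / (Ps s * Ps s))) has_real_derivative
       - ((2 * (\<integral>x. u s x * u' s x \<partial>L) * (Ps s * Ps s) - Qs s * ((A - Ks s) * Ps s * Ps s + (A - Ks s) * Ps s * Ps s))
          / (Ps s * Ps s * (Ps s * Ps s)))) (at s)"
    proof -
      have dP2: "((\<lambda>s. Ps s * Ps s) has_real_derivative (A - Ks s) * Ps s * Ps s + (A - Ks s) * Ps s * Ps s) (at s)"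
        by (rule DERIV_mult[OF Ps_der[OF s] Ps_der[OF s]])
      show ?thesis by (rule DERIV_minus[OF DERIV_divide[OF Qs_deriv[OF s] dP2]]) (use Pp in simp)
    qed
    have le: "2 * (\<integral>x. u s x * u' s x \<partial>L) \<le> 2 * ((A - Ks s) * Qs s)" using Qs_der_le[OF s] by simp
    have "(2 * (\<integral>x. u s x * u' s x \<partial>L) * (Ps s * Ps s) - Qs s * ((A - Ks s) * Ps s * Ps s + (A - Ks s) * Ps s * Ps s))
       = (Ps s * Ps s) * (2 * (\<integral>x. u s x * u' s x \<partial>L) - 2 * ((A - Ks s) * Qs s))"
      by (simp add: algebra_simps)
    also have "\<dots> \<le> 0" using le Pp by (intro mult_nonneg_nonpos) auto
    finally have "(2 * (\<integral>x. u s x * u' s x \<partial>L) * (Ps s * Ps s) - Qs s * ((A - Ks s) * Ps s * Ps s + (A - Ks s) * Ps s * Ps s))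
          / (Ps s * Ps s * (Ps s * Ps s)) \<le> 0"
      using Pp by (intro divide_nonpos_pos) auto
    then show "0 \<le> - ((2 * (\<integral>x. u s x * u' s x \<partial>L) * (Ps s * Ps s) - Qs s * ((A - Ks s) * Ps s * Ps s + (A - Ks s) * Ps s * Ps s))
          / (Ps s * Ps s * (Ps s * Ps s)))" by simp
  qed
  then show ?thesis by simp
qed

lemma Ps_le: assumes s: "0 \<le> s" and B: "AE x in L. \<bar>ub x\<bar> \<le> Bu" shows "Ps s \<le> Bu * Ms s"
proof -
  have "AE x in L. ub x * u s x \<le> Bu * u s x"
    using eventually_conj[OF B aeu[OF s]] by (rule eventually_mono) (auto intro!: mult_right_mono)
  then have "Ps s \<le> (\<integral>x. Bu * u s x \<partial>L)" unfolding Ps_def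
    using ints[OF ub_bdd s] uint[OF s] by (intro integral_mono_AE) auto
  then show ?thesis unfolding Ms_def by simp
qed

lemma Qs_lower: assumes s: "0 \<le> s" shows "(Ms s)\<^sup>2 / measure L \<Omega> \<le> Qs s"
proof -
  define \<mu> where "\<mu> = measure L \<Omega>"
  have mp: "0 < \<mu>" unfolding \<mu>_def using measL_pos measure_restrict_space[OF Om_sets' order_refl] by simp
  define \<beta> where "\<beta> = Ms s / \<mu>"
  have iu: "integrable L (u s)" by (rule uint[OF s])
  have iuu: "integrable L (\<lambda>x. u s x * u s x)" using bi[OF uX[OF s] uX[OF s]] .
  have "0 \<le> (\<integral>x. (u s x - \<beta>) * (u s x - \<beta>) \<partial>L)" by simp
  also have "(\<integral>x. (u s x - \<beta>) * (u s x - \<beta>) \<partial>L) = (\<integral>x. u s x * u s x - 2 * \<beta> * u s x + \<beta> * \<beta> \<partial>L)"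
    by (simp add: algebra_simps)
  also have "\<dots> = Qs s - 2 * \<beta> * Ms s + \<beta> * \<beta> * \<mu>"
    using iu iuu unfolding Qs_def Ms_def \<mu>_def by (simp add: integral_add integral_diff)
  finally have "0 \<le> Qs s - 2 * \<beta> * Ms s + \<beta> * \<beta> * \<mu>" .
  moreover have "2 * \<beta> * Ms s - \<beta> * \<beta> * \<mu> = (Ms s)\<^sup>2 / \<mu>"
    unfolding \<beta>_def using mp by (simp add: field_simps power2_eq_square)
  ultimately show ?thesis unfolding \<mu>_def[symmetric] by linarith
qed

lemma final: "\<exists>c2 C2. 0 < c2 \<and> c2 < C2 \<and> (\<forall>t>0. c2 \<le> sqrt (Qs t) \<and> sqrt (Qs t) < C2)"
proof -
  obtain Mb where Mb: "0 < Mb" "\<And>t. 0 \<le> t \<Longrightarrow> Ms t \<le> Mb" using Ms_upper by blast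
  obtain Ml where Ml: "0 < Ml" "\<And>t. 0 \<le> t \<Longrightarrow> Ml \<le> Ms t" using Ms_lower by blast
  obtain Bu where Bu: "0 \<le> Bu" "AE x in L. \<bar>ub x\<bar> \<le> Bu" using bdd_nnB[OF ub_bdd] .
  define \<mu> where "\<mu> = measure L \<Omega>"
  have mp: "0 < \<mu>" unfolding \<mu>_def using measL_pos measure_restrict_space[OF Om_sets' order_refl] by simp
  define R0 where "R0 = Qs 0 / (Ps 0 * Ps 0)"
  have R0: "0 \<le> R0" unfolding R0_def Qs_def by simp
  define c2 where "c2 = sqrt (Ml\<^sup>2 / \<mu>)"
  define C2 where "C2 = sqrt R0 * (Bu * Mb) + c2 + 1"
  have c2p: "0 < c2" unfolding c2_def using Ml mp by simp
  show ?thesis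
  proof (intro exI conjI allI impI)
    show "0 < c2" by (rule c2p)
    have "0 \<le> sqrt R0 * (Bu * Mb)" using R0 Bu Mb by simp
    then show "c2 < C2" unfolding C2_def by simp
    fix t :: real assume t: "0 < t"
    have "Ml\<^sup>2 \<le> (Ms t)\<^sup>2" using Ml(2)[of t] Ml(1) t by (intro power_mono) auto
    then have "Ml\<^sup>2 / \<mu> \<le> (Ms t)\<^sup>2 / \<mu>" using mp by (simp add: divide_right_mono)
    also have "\<dots> \<le> Qs t" using Qs_lower[of t] t unfolding \<mu>_def by simp
    finally show "c2 \<le> sqrt (Qs t)" unfolding c2_def by simp
    have Pp: "0 < Ps t" using Ps_pos[of t] t by simp
    have "Qs t / (Ps t * Ps t) \<le> R0" unfolding R0_def using R_decr[of t] t by simp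
    then have "Qs t \<le> R0 * (Ps t * Ps t)" using Pp by (simp add: divide_le_eq)
    also have "Ps t \<le> Bu * Mb"
      using Ps_le[OF _ Bu(2), of t] mult_left_mono[OF Mb(2)[of t] Bu(1)] t by simp
    then have "Ps t * Ps t \<le> (Bu * Mb) * (Bu * Mb)" using Pp by (intro mult_mono) auto
    then have "R0 * (Ps t * Ps t) \<le> R0 * ((Bu * Mb) * (Bu * Mb))" using R0 by (intro mult_left_mono)
    finally have "sqrt (Qs t) \<le> sqrt (R0 * ((Bu * Mb) * (Bu * Mb)))" by simp
    also have "\<dots> = sqrt R0 * (Bu * Mb)" using Bu Mb by (simp add: real_sqrt_mult)
    finally show "sqrt (Qs t) < C2" unfolding C2_def using c2p by simp
  qed
qed

end

theorem lemma4p2: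
  fixes \<Omega> :: "'n::euclidean_space set"
    and a :: "'n \<Rightarrow> real" and m :: "'n \<Rightarrow> 'n \<Rightarrow> real" and k :: "'n \<Rightarrow> real"
    and c0 C0 :: real
    and ubar u0 :: "'n \<Rightarrow> real"
    and u u' :: "real \<Rightarrow> 'n \<Rightarrow> real"
  assumes \<Omega>_open: "open \<Omega>" and \<Omega>_bounded: "bounded \<Omega>" and \<Omega>_conn: "connected \<Omega>"
    and \<Omega>_lip: "lipschitz_boundary \<Omega>"
    and a_cont: "continuous_on (closure \<Omega>) a" and a_pos: "\<forall>x\<in>closure \<Omega>. a x > 0"
    and m_nonneg: "\<forall>x\<in>\<Omega>. \<forall>y\<in>\<Omega>. 0 \<le> m x y"
    and m_sym: "\<forall>x\<in>\<Omega>. \<forall>y\<in>\<Omega>. m x y = m y x"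
    and m_meas: "\<forall>x\<in>\<Omega>. (\<lambda>y. m x y) \<in> borel_measurable (lebesgue_on \<Omega>)"
    and m_unif: "AE y in lebesgue. y \<in> \<Omega> \<longrightarrow> uniformly_continuous_on \<Omega> (\<lambda>x. m x y)"
    and m_bound: "\<exists>B::real. \<forall>x\<in>\<Omega>. (\<integral>\<^sup>+ y. ennreal (m x y * indicator \<Omega> y) \<partial>lebesgue) \<le> ennreal B"
    and c0_pos: "0 < c0" and c0_C0: "c0 \<le> C0"
    and k_meas: "k \<in> borel_measurable lebesgue"
    and k_bounds: "\<forall>y. c0 * indicator \<Omega> y \<le> k y \<and> k y \<le> C0 * indicator \<Omega> y"
    (* positive stationary solution *)
    and ubar_X: "in_L1_Linf \<Omega> ubar"
    and ubar_pos: "AE x in lebesgue. x \<in> \<Omega> \<longrightarrow> ubar x > 0"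
    and ubar_eq: "AE x in lebesgue. x \<in> \<Omega> \<longrightarrow>
        nonlocal_op \<Omega> m ubar x + (a x - (LINT y:\<Omega>|lebesgue. k y * ubar y)) * ubar x = 0"
    (* initial datum *)
    and u0_X: "in_L1_Linf \<Omega> u0"
    and u0_nonneg: "AE x in lebesgue. x \<in> \<Omega> \<longrightarrow> u0 x \<ge> 0"
    and u0_nonzero: "\<not> (AE x in lebesgue. x \<in> \<Omega> \<longrightarrow> u0 x = 0)"
    (* u \<in> C([0,\<infinity>);X) \<inter> C^1((0,\<infinity>);X), X = L^1 \<inter> L^\<infinity>, with derivative u' *)
    and u_X: "\<forall>t\<ge>0. in_L1_Linf \<Omega> (u t)"
    and u'_X: "\<forall>t>0. in_L1_Linf \<Omega> (u' t)"
    and u_deriv: "\<forall>t>0. ((\<lambda>h. X_norm \<Omega> (\<lambda>x. (u (t + h) x - u t x) / h - u' t x)) \<longlongrightarrow> 0) (at 0)"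
    and u'_cont: "\<forall>t>0. ((\<lambda>s. X_norm \<Omega> (\<lambda>x. u' s x - u' t x)) \<longlongrightarrow> 0) (at t within {0<..})"
    and u_cont0: "((\<lambda>s. X_norm \<Omega> (\<lambda>x. u s x - u 0 x)) \<longlongrightarrow> 0) (at_right 0)"
    and u_init: "AE x in lebesgue. x \<in> \<Omega> \<longrightarrow> u 0 x = u0 x"
    and u_nonneg: "\<forall>t\<ge>0. AE x in lebesgue. x \<in> \<Omega> \<longrightarrow> u t x \<ge> 0"
    and u_eq: "\<forall>t>0. AE x in lebesgue. x \<in> \<Omega> \<longrightarrow>
        u' t x = nonlocal_op \<Omega> m (u t) x + (a x - (LINT y:\<Omega>|lebesgue. k y * u t y)) * u t x"
  shows "\<exists>c2 C2. 0 < c2 \<and> c2 < C2 \<and> (\<forall>t>0. c2 \<le> L2_norm \<Omega> (u t) \<and> L2_norm \<Omega> (u t) < C2)"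
proof -
  have Ne: "\<Omega> \<noteq> {}"
  proof
    assume "\<Omega> = {}"
    then have "AE x in lebesgue. x \<in> \<Omega> \<longrightarrow> u0 x = 0" by simp
    with u0_nonzero show False by simp
  qed
  interpret D: dom \<Omega> by unfold_locales (use \<Omega>_open \<Omega>_bounded Ne in auto)
  let ?L = "lebesgue_on \<Omega>"
  have uX: "\<And>s. 0 \<le> s \<Longrightarrow> D.bdd (u s)" using u_X D.in_L1_Linf_iff by auto
  have u'X: "\<And>s. 0 < s \<Longrightarrow> D.bdd (u' s)" using u'_X D.in_L1_Linf_iff by auto
  have ubar_b: "D.bdd ubar" using ubar_X D.in_L1_Linf_iff by auto
  have m_cont: "AE y in ?L. continuous_on \<Omega> (\<lambda>x. m x y)"
    using m_unif unfolding D.AEL by (rule eventually_mono) (rule uniformly_continuous_imp_continuous)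
  obtain G N where G: "G \<in> borel_measurable (?L \<Otimes>\<^sub>M ?L)" "N \<in> null_sets ?L"
    "\<And>x y. G (x, y) = G (y, x)" "\<And>x y. 0 \<le> G (x, y)"
    "\<And>x y. x \<in> \<Omega> - N \<Longrightarrow> y \<in> \<Omega> - N \<Longrightarrow> G (x, y) = m x y"
    "\<And>x y. x \<notin> \<Omega> - N \<Longrightarrow> G (x, y) = 0"
    using D.construct_G[OF m_nonneg m_sym m_meas m_cont] by blast
  obtain B where B: "\<forall>x\<in>\<Omega>. (\<integral>\<^sup>+ y. ennreal (m x y * indicator \<Omega> y) \<partial>lebesgue) \<le> ennreal B"
    using m_bound by blast
  define Hb where "Hb = max B 0"
  have m_bnd: "(\<integral>\<^sup>+y. ennreal (m x y) \<partial>?L) \<le> ennreal Hb" if x: "x \<in> \<Omega>" for x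
  proof -
    have "(\<integral>\<^sup>+y. ennreal (m x y) \<partial>?L) = (\<integral>\<^sup>+y. ennreal (m x y) * indicator \<Omega> y \<partial>lebesgue)"
      by (rule nn_integral_restrict_space[OF D.Om_sets'])
    also have "\<dots> = (\<integral>\<^sup>+ y. ennreal (m x y * indicator \<Omega> y) \<partial>lebesgue)"
      by (intro nn_integral_cong) (simp split: split_indicator)
    also have "\<dots> \<le> ennreal B" using B x by auto
    also have "\<dots> \<le> ennreal Hb" unfolding Hb_def by (simp add: ennreal_leI)
    finally show ?thesis .
  qed
  have KG: "kernG \<Omega> m G N Hb"
    by (intro kernG.intro D.dom_axioms kernG_axioms.intro G m_bnd)
       (use m_meas Hb_def in auto)
  interpret K: kernG \<Omega> m G N Hb by (rule KG)
  define ub where "ub x = (if 0 < ubar x then ubar x else 1)" for x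
  have ubar_m[measurable]: "ubar \<in> borel_measurable ?L" using ubar_b by (simp add: D.bdd_def)
  have ub_m: "ub \<in> borel_measurable ?L" unfolding ub_def by measurable
  have ubar_pos': "AE x in ?L. 0 < ubar x" using ubar_pos unfolding D.AEL .
  have ub_ae: "AE x in ?L. ubar x = ub x" using ubar_pos' by (rule eventually_mono) (simp add: ub_def)
  have ub_b: "D.bdd ub" by (rule D.bdd_cong[OF ubar_b ub_m ub_ae])
  have ub_pos: "\<And>x. 0 < ub x" unfolding ub_def by simp
  have kb: "c0 \<le> k x \<and> k x \<le> C0" if "x \<in> \<Omega>" for x
  proof -
    have "c0 * indicator \<Omega> x \<le> k x \<and> k x \<le> C0 * indicator \<Omega> x" using k_bounds by blast
    then show ?thesis using that by simp
  qed
  have k_lo: "\<And>x. x \<in> \<Omega> \<Longrightarrow> c0 \<le> k x" and k_hi: "\<And>x. x \<in> \<Omega> \<Longrightarrow> k x \<le> C0"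
    using kb by auto
  have k_m: "k \<in> borel_measurable ?L" by (rule measurable_restrict_space1[OF k_meas])
  have k_b: "D.bdd k" unfolding D.bdd_def
  proof (intro conjI exI)
    show "k \<in> borel_measurable ?L" by (rule k_m)
    show "AE x in ?L. \<bar>k x\<bar> \<le> C0" using AE_space
      by (rule eventually_mono) (use k_lo k_hi c0_pos in force)
  qed
  have cl: "compact (closure \<Omega>)" "closure \<Omega> \<noteq> {}" using \<Omega>_bounded Ne by auto
  obtain xmin where xmin: "xmin \<in> closure \<Omega>" "\<forall>y\<in>closure \<Omega>. a xmin \<le> a y"
    using continuous_attains_inf[OF cl a_cont] by blast
  obtain xmax where xmax: "xmax \<in> closure \<Omega>" "\<forall>y\<in>closure \<Omega>. a y \<le> a xmax"
    using continuous_attains_sup[OF cl a_cont] by blast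
  have a_lo: "\<And>x. x \<in> \<Omega> \<Longrightarrow> a xmin \<le> a x" using xmin closure_subset by blast
  have a_hi: "\<And>x. x \<in> \<Omega> \<Longrightarrow> a x \<le> a xmax" using xmax closure_subset by blast
  have amin_pos: "0 < a xmin" using a_pos xmin by auto
  have a_m: "a \<in> borel_measurable ?L"
    by (rule continuous_imp_measurable_on_sets_lebesgue[OF continuous_on_subset[OF a_cont closure_subset] D.Om_sets])
  have a_b: "D.bdd a" unfolding D.bdd_def
  proof (intro conjI exI)
    show "a \<in> borel_measurable ?L" by (rule a_m)
    show "AE x in ?L. \<bar>a x\<bar> \<le> a xmax" using AE_space
      by (rule eventually_mono) (use a_lo a_hi amin_pos in force)
  qed
  define A where "A = (\<integral>x. k x * ub x \<partial>?L)"
  have A_eq: "(LINT y:\<Omega>|lebesgue. k y * ubar y) = A"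
    unfolding D.setint A_def using ub_ae k_m ubar_m ub_m
    by (intro integral_cong_AE) (auto elim!: eventually_mono)
  have IIub: "K.II ubar x = K.II ub x" for x by (rule K.II_cong[OF ubar_m ub_m ub_ae])
  have ub_eq: "AE x in ?L. K.II ub x = (A + K.hh x - a x) * ub x"
    using ubar_eq[unfolded D.AEL] K.AE_notN ubar_pos'
  proof eventually_elim
    case (elim x)
    then have "nonlocal_op \<Omega> m ubar x = K.II ubar x - ubar x * K.hh x" using K.NL ubar_b by blast
    then have "K.II ub x - ub x * K.hh x + (a x - A) * ub x = 0" using elim A_eq IIub by (simp add: ub_def)
    then show ?case by (simp add: algebra_simps)
  qed
  have ueq: "AE x in ?L. u' t x = K.II (u t) x - u t x * K.hh x + (a x - (\<integral>y. k y * u t y \<partial>?L)) * u t x"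
    if t: "0 < t" for t
    using u_eq[rule_format, OF t, unfolded D.AEL] K.AE_notN
  proof eventually_elim
    case (elim x)
    then have "nonlocal_op \<Omega> m (u t) x = K.II (u t) x - u t x * K.hh x" using K.NL uX t by auto
    then show ?case using elim by (simp add: D.setint)
  qed
  have unn: "\<And>s. 0 \<le> s \<Longrightarrow> AE x in ?L. 0 \<le> u s x" using u_nonneg D.AEL by auto
  have u0pos: "\<not> (AE x in ?L. u 0 x = 0)"
  proof
    assume "AE x in ?L. u 0 x = 0"
    then have "AE x in ?L. u0 x = 0" using u_init[unfolded D.AEL] by eventually_elim auto
    with u0_nonzero show False unfolding D.AEL by simp
  qed
  have MC: "mainctx \<Omega> m G N Hb u u' a k ub A (a xmin) (a xmax) c0 C0"
    by (intro mainctx.intro KG mainctx_axioms.intro uX u'X u_deriv[rule_format] u_cont0 unn u0pos ueq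
        a_b a_lo a_hi amin_pos k_b k_lo k_hi c0_pos ub_b ub_pos A_def ub_eq) auto
  obtain c2 C2 where cC: "0 < c2" "c2 < C2" "\<forall>t>0. c2 \<le> sqrt (mainctx.Qs \<Omega> u t) \<and> sqrt (mainctx.Qs \<Omega> u t) < C2"
    using mainctx.final[OF MC] by blast
  have L2: "L2_norm \<Omega> (u t) = sqrt (mainctx.Qs \<Omega> u t)" for t
    unfolding L2_norm_def mainctx.Qs_def[OF MC] D.setint by (simp add: power2_eq_square)
  show ?thesis using cC unfolding L2 by blast
qed


end
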